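(* Let $\mathcal K$ be a real Hilbert space, let $f\colon\mathcal K\to\,]-\infty,+\infty]$ be a proper lower semicontinuous convex function, let $\alpha,\beta\in\,]0,+\infty[$, let $B\colon\mathcal K\to\mathcal K$ be monotone and $\beta$-Lipschitzian, let $(\eta_n)_{n\in\mathbb N}$ be a summable sequence in $[0,+\infty[$, and let $(U_n)_{n\in\mathbb N}$ be a sequence in $\mathcal P_\alpha(\mathcal K)$ with $\mu=\sup_n\|U_n\|<+\infty$ and $(1+\eta_n)U_{n+1}\succcurlyeq U_n$ for all $n$. Let $x_0\in\mathcal K$, let $\varepsilon\in\,]0,\min\{1,1/(\mu\beta+1)\}[$, and let $(\gamma_n)_{n\in\mathbb N}$ be a sequence in $[\varepsilon,(1-\varepsilon)/(\beta\mu)]$. Suppose the variational inequality $$\text{find } \bar x\in\mathcal K \text{ such that } (\forall y\in\mathcal K)\ \ \langle \bar x-y, B\bar x\rangle+f(\bar x)\le f(y)$$ has at least one solution, and for every $n\in\mathbb N$ set $$y_n=x_n-\gamma_nU_nBx_n,\quad p_n=\operatorname*{argmin}_{x\in\mathcal K}\Big(f(x)+\tfrac{1}{2\gamma_n}\|x-y_n\|_{U_n^{-1}}^2\Big),\quad q_n=p_n-\gamma_nU_nBp_n,\quad x_{n+1}=x_n-y_n+q_n.$$ Then $(x_n)_{n\in\mathbb N}$ converges weakly to a solution of the variational inequality.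
   Context: $\mathcal P_\alpha(\mathcal K)=\{M\in\mathcal B(\mathcal K): M^*=M,\ \langle Mx,x\rangle\ge\alpha\|x\|^2\ \forall x\}$, where $\mathcal B(\mathcal K)$ denotes bounded linear operators on $\mathcal K$. For self-adjoint $M_1,M_2$, $M_1\succcurlyeq M_2$ means $\langle M_1x,x\rangle\ge\langle M_2x,x\rangle$ for all $x$. For $M\in\mathcal P_\alpha(\mathcal K)$, $\|x\|_M=\sqrt{\langle Mx,x\rangle}$. *)

theory Defs
  imports "HOL-Analysis.Analysis"
begin

text \<open>Functions into ]-\<infinity>,+\<infinity>] are modelled as functions into ereal never taking -\<infinity>.\<close>

definition proper_fun :: "('a \<Rightarrow> ereal) \<Rightarrow> bool" where
  "proper_fun f \<longleftrightarrow> (\<forall>x. f x \<noteq> -\<infinity>) \<and> (\<exists>x. f x \<noteq> \<infinity>)"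

definition lsc_fun :: "('a::topological_space \<Rightarrow> ereal) \<Rightarrow> bool" where
  "lsc_fun f \<longleftrightarrow> (\<forall>c::ereal. closed {x. f x \<le> c})"

definition convex_fun :: "('a::real_vector \<Rightarrow> ereal) \<Rightarrow> bool" where
  "convex_fun f \<longleftrightarrow> (\<forall>x y t. 0 \<le> t \<and> t \<le> 1 \<longrightarrow>
      f ((1 - t) *\<^sub>R x + t *\<^sub>R y) \<le> ereal (1 - t) * f x + ereal t * f y)"

definition monotone_op :: "('a::real_inner \<Rightarrow> 'a) \<Rightarrow> bool" where
  "monotone_op B \<longleftrightarrow> (\<forall>x y. inner (x - y) (B x - B y) \<ge> 0)"

definition P_alpha :: "real \<Rightarrow> ('a::real_inner \<Rightarrow> 'a) set" where
  "P_alpha \<alpha> = {M. bounded_linear M \<and> (\<forall>x y. inner (M x) y = inner x (M y))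
                   \<and> (\<forall>x. inner (M x) x \<ge> \<alpha> * (norm x)\<^sup>2)}"

definition loewner_ge :: "('a::real_inner \<Rightarrow> 'a) \<Rightarrow> ('a \<Rightarrow> 'a) \<Rightarrow> bool" where
  "loewner_ge M1 M2 \<longleftrightarrow> (\<forall>x. inner (M1 x) x \<ge> inner (M2 x) x)"

definition M_norm :: "('a::real_inner \<Rightarrow> 'a) \<Rightarrow> 'a \<Rightarrow> real" where
  "M_norm M x = sqrt (inner (M x) x)"

definition weakly_converges :: "(nat \<Rightarrow> 'a::real_inner) \<Rightarrow> 'a \<Rightarrow> bool" where
  "weakly_converges x l \<longleftrightarrow> (\<forall>y. (\<lambda>n. inner (x n) y) \<longlonglongrightarrow> inner l y)"

definition vi_solution :: "('a::real_inner \<Rightarrow> ereal) \<Rightarrow> ('a \<Rightarrow> 'a) \<Rightarrow> 'a \<Rightarrow> bool" where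
  "vi_solution f B xb \<longleftrightarrow> (\<forall>y. ereal (inner (xb - y) (B xb)) + f xb \<le> f y)"

end

theory Submission
  imports Defs "HOL-Library.Diagonal_Subsequence"
begin
lemma le_small:
  fixes a b :: real
  assumes "\<And>t. 0 < t \<Longrightarrow> t \<le> 1 \<Longrightarrow> a \<le> t * b"
  shows "a \<le> 0"
proof (rule ccontr)
  assume "\<not> a \<le> 0"
  hence a: "a > 0" by simp
  have "a \<le> b" using assms[of 1] by simp
  hence b: "b > 0" using a by simp
  have "a \<le> (a/(2*b)) * b"
    using assms[of "a/(2*b)"] a b \<open>a \<le> b\<close> by (simp add: field_simps)
  also have "\<dots> = a/2" using b by simp
  finally show False using a by simp
qed

lemma aux_lin: fixes i a b n x y :: real
  shows "i \<le> (a+b)/2 - n \<Longrightarrow> a < i + x \<Longrightarrow> b < i + y \<Longrightarrow> n \<le> (x+y)/2" by (simp add: field_simps)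

lemma aux_lin2: fixes a b n z :: real
  shows "a \<le> z \<Longrightarrow> b \<le> z \<Longrightarrow> n \<le> (a+b)/2 \<Longrightarrow> n \<le> z" by (simp add: field_simps)

lemma min_exists:
  fixes g :: "'a::{real_inner,complete_space} \<Rightarrow> ereal"
  assumes lsc: "\<And>c. closed {x. g x \<le> c}"
    and bdd: "\<And>x. g x \<ge> ereal m"
    and pr: "\<exists>x. g x < \<infinity>"
    and c: "c > 0"
    and sc: "\<And>a b ra rb. g a = ereal ra \<Longrightarrow> g b = ereal rb \<Longrightarrow>
               g ((1/2) *\<^sub>R (a + b)) \<le> ereal ((ra + rb)/2 - c * (norm (a - b))\<^sup>2)"
  shows "\<exists>z. \<forall>x. g z \<le> g x"
proof -
  define I where "I = (INF x. g x)"
  have "I \<ge> ereal m" unfolding I_def using bdd by (simp add: le_INF_iff)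
  moreover have "I < \<infinity>" proof - obtain x0 where "g x0 < \<infinity>" using pr by blast thus ?thesis unfolding I_def by (metis INF_lower UNIV_I order.strict_trans1) qed
  ultimately obtain i where Ii: "I = ereal i" by (cases I) auto
  have ex: "\<exists>x. g x < ereal (i + 1/(real k + 1))" for k
  proof -
    have "I < ereal (i + 1/(real k + 1))" using Ii by (simp add: add_pos_pos)
    thus ?thesis unfolding I_def by (simp add: INF_less_iff)
  qed
  then obtain xs where xs: "\<And>k. g (xs k) < ereal (i + 1/(real k + 1))" by metis
  have gI: "g x \<ge> ereal i" for x unfolding Ii[symmetric] I_def by (rule INF_lower) simp
  have real: "\<exists>r. g (xs k) = ereal r \<and> i \<le> r \<and> r < i + 1/(real k + 1)" for k
    using xs[of k] gI[of "xs k"] by (cases "g (xs k)") auto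
  then obtain r where r: "\<And>k. g (xs k) = ereal (r k)" "\<And>k. i \<le> r k" "\<And>k. r k < i + 1/(real k + 1)"
    by metis
  have dist: "c * (norm (xs k - xs l))\<^sup>2 \<le> (1/(real k + 1) + 1/(real l + 1))/2" for k l
  proof -
    have "ereal i \<le> g ((1/2) *\<^sub>R (xs k + xs l))" by (rule gI)
    also have "\<dots> \<le> ereal ((r k + r l)/2 - c * (norm (xs k - xs l))\<^sup>2)" by (rule sc[OF r(1) r(1)])
    finally have "i \<le> (r k + r l)/2 - c * (norm (xs k - xs l))\<^sup>2" by simp
    thus ?thesis using r(3)[of k] r(3)[of l] by (rule aux_lin)
  qed
  have "Cauchy xs"
  proof (rule metric_CauchyI)
    fix e :: real assume e: "e > 0"
    obtain N :: nat where N: "real N > 1/(c * e^2)" using reals_Archimedean2 by blast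
    have "dist (xs k) (xs l) < e" if "k \<ge> N" "l \<ge> N" for k l
    proof -
      have Npos: "real N > 0" using N c e by (smt (verit) divide_pos_pos mult_pos_pos zero_less_power)
      have "1/(real k + 1) \<le> 1/(real N)" using that Npos by (simp add: frac_le)
      moreover have "1/(real l + 1) \<le> 1/(real N)" using that Npos by (simp add: frac_le)
      ultimately have "c * (norm (xs k - xs l))\<^sup>2 \<le> 1/real N" using dist[of k l] by (rule aux_lin2)
      also have "1/real N < c * e^2" using N c e Npos by (simp add: field_simps)
      finally have "(norm (xs k - xs l))\<^sup>2 < e^2" using c by simp
      hence "norm (xs k - xs l) < e" using e by (simp add: power_less_imp_less_base)
      thus ?thesis by (simp add: dist_norm)
    qed
    thus "\<exists>M. \<forall>m\<ge>M. \<forall>n\<ge>M. dist (xs m) (xs n) < e" by blast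
  qed
  then obtain z where z: "xs \<longlonglongrightarrow> z" using Cauchy_convergent_iff convergent_def by blast
  have "g z \<le> ereal (i + 1/(real j + 1))" for j
  proof -
    have "closed {x. g x \<le> ereal (i + 1/(real j + 1))}" by (rule lsc)
    moreover have "(\<lambda>k. xs (k + j)) \<longlonglongrightarrow> z" using z by (rule LIMSEQ_ignore_initial_segment)
    moreover have "g (xs (k + j)) \<le> ereal (i + 1/(real j + 1))" for k
    proof -
      have "1/(real (k+j) + 1) \<le> 1/(real j + 1)" by (simp add: frac_le)
      thus ?thesis using r(3)[of "k+j"] r(1)[of "k+j"] by simp
    qed
    ultimately show ?thesis using closed_sequentially[of "{x. g x \<le> ereal (i + 1/(real j + 1))}" "\<lambda>k. xs (k + j)" z] by simp
  qed
  hence "g z \<le> ereal i"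
  proof -
    assume h: "\<And>j. g z \<le> ereal (i + 1/(real j + 1))"
    have "g z \<noteq> \<infinity>" using h[of 0] by auto
    moreover have "g z \<noteq> -\<infinity>" using gI[of z] by auto
    ultimately obtain v where v: "g z = ereal v" by (cases "g z") auto
    have "v \<le> i + 1/(real j + 1)" for j using h[of j] v by simp
    hence "v \<le> i"
    proof -
      assume hv: "\<And>j. v \<le> i + 1/(real j + 1)"
      have "(\<lambda>j. 1/(real j + 1)) \<longlonglongrightarrow> 0"
        using LIMSEQ_inverse_real_of_nat by (simp add: inverse_eq_divide add.commute)
      hence "(\<lambda>j. i + 1/(real j + 1)) \<longlonglongrightarrow> i + 0"
        by (rule tendsto_add[OF tendsto_const])
      hence "(\<lambda>j. i + 1/(real j + 1)) \<longlonglongrightarrow> i" by simp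
      thus ?thesis using hv LIMSEQ_le_const[of "\<lambda>j. i + 1/(real j + 1)" i v] by blast
    qed
    thus ?thesis using v by simp
  qed
  hence "\<forall>x. g z \<le> g x" using gI order_trans by blast
  thus ?thesis by blast
qed

lemma paral:
  fixes u v :: "'a::real_inner"
  shows "(norm ((1/2) *\<^sub>R (u + v)))\<^sup>2 = ((norm u)\<^sup>2 + (norm v)\<^sup>2)/2 - (1/4) * (norm (v - u))\<^sup>2"
proof -
  have "(norm ((1/2) *\<^sub>R (u + v)))\<^sup>2 = (1/4) * (norm (u + v))\<^sup>2"
    by (simp add: power_mult_distrib power_divide)
  also have "(norm (u + v))\<^sup>2 = (norm u)\<^sup>2 + 2 * inner u v + (norm v)\<^sup>2"
    by (simp add: power2_norm_eq_inner inner_add_left inner_add_right inner_commute)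
  finally have "(norm ((1/2) *\<^sub>R (u + v)))\<^sup>2 = (1/4) * ((norm u)\<^sup>2 + 2 * inner u v + (norm v)\<^sup>2)" .
  moreover have "(norm (v - u))\<^sup>2 = (norm u)\<^sup>2 - 2 * inner u v + (norm v)\<^sup>2"
    by (simp add: power2_norm_eq_inner inner_diff_left inner_diff_right inner_commute)
  ultimately show ?thesis by (simp add: field_simps)
qed

lemma norm_diff_scale:
  fixes a b :: "'a::real_inner"
  shows "(norm (a - t *\<^sub>R b))\<^sup>2 = (norm a)\<^sup>2 - 2 * t * inner a b + t^2 * (norm b)\<^sup>2"
  unfolding power2_norm_eq_inner
  by (simp add: inner_diff_left inner_diff_right inner_commute power2_eq_square algebra_simps)

lemma norm_add_scale:
  fixes a b :: "'a::real_inner"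
  shows "(norm (a + t *\<^sub>R b))\<^sup>2 = (norm a)\<^sup>2 + 2 * t * inner a b + t^2 * (norm b)\<^sup>2"
  unfolding power2_norm_eq_inner
  by (simp add: inner_add_left inner_add_right inner_commute power2_eq_square algebra_simps)

lemma proj_exists:
  fixes C :: "'a::{real_inner,complete_space} set"
  assumes "closed C" "convex C" "C \<noteq> {}"
  shows "\<exists>c\<in>C. \<forall>u\<in>C. inner (y - c) (u - c) \<le> 0"
proof -
  define g where "g u = (if u \<in> C then ereal ((norm (y - u))\<^sup>2) else \<infinity>)" for u
  have lsc: "closed {x. g x \<le> c}" for c
  proof (cases "c = \<infinity>")
    case True thus ?thesis by simp
  next
    case False
    have "{x. g x \<le> c} = C \<inter> {x. ereal ((norm (y - x))\<^sup>2) \<le> c}"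
      using False by (auto simp: g_def split: if_splits)
    moreover have "closed {x. ereal ((norm (y - x))\<^sup>2) \<le> c}"
    proof -
      have "continuous_on UNIV (\<lambda>x. ereal ((norm (y - x))\<^sup>2))"
        by (intro continuous_on_ereal continuous_intros)
      thus ?thesis using closed_Collect_le[of "\<lambda>x. ereal ((norm (y - x))\<^sup>2)" "\<lambda>_. c"]
        by (simp add: continuous_on_const)
    qed
    ultimately show ?thesis using assms(1) by auto
  qed
  have bdd: "g x \<ge> ereal 0" for x by (simp add: g_def)
  have pr: "\<exists>x. g x < \<infinity>" using assms(3) by (auto simp: g_def)
  have sc: "g ((1/2) *\<^sub>R (a + b)) \<le> ereal ((ra + rb)/2 - (1/4) * (norm (a - b))\<^sup>2)"
    if "g a = ereal ra" "g b = ereal rb" for a b ra rb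
  proof -
    have ab: "a \<in> C" "b \<in> C" using that by (auto simp: g_def split: if_splits)
    hence ra: "ra = (norm (y - a))\<^sup>2" and rb: "rb = (norm (y - b))\<^sup>2" using that by (auto simp: g_def)
    have m: "(1/2) *\<^sub>R (a + b) \<in> C"
    proof -
      have "(1/2::real) *\<^sub>R a + (1/2::real) *\<^sub>R b \<in> C"
        by (rule convexD[OF assms(2) ab]) auto
      thus ?thesis by (simp add: scaleR_add_right)
    qed
    have hy: "(1/2::real) *\<^sub>R y + (1/2::real) *\<^sub>R y = y" by (simp flip: scaleR_add_left)
    have e1: "y - (1/2) *\<^sub>R (a + b) = (1/2) *\<^sub>R ((y - a) + (y - b))"
      using hy by (simp add: algebra_simps)
    have e2: "a - b = (y - b) - (y - a)" by simp
    have "(norm (y - (1/2) *\<^sub>R (a + b)))\<^sup>2 = ((norm (y - a))\<^sup>2 + (norm (y - b))\<^sup>2)/2 - (1/4) * (norm (a - b))\<^sup>2"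
      unfolding e1 e2 by (rule paral)
    thus ?thesis using m ra rb by (simp add: g_def)
  qed
  have ex: "\<exists>z. \<forall>x. g z \<le> g x"
  proof (rule min_exists[where c="1/4", OF lsc bdd pr])
    show "(0::real) < 1/4" by simp
  next
    fix a b ra rb assume "g a = ereal ra" "g b = ereal rb"
    thus "g ((1/2) *\<^sub>R (a + b)) \<le> ereal ((ra + rb)/2 - (1/4) * (norm (a - b))\<^sup>2)" by (rule sc)
  qed
  then obtain c where c: "\<And>x. g c \<le> g x" by blast
  obtain u0 where "u0 \<in> C" using assms(3) by blast
  hence cC: "c \<in> C" using c[of u0] by (auto simp: g_def split: if_splits)
  have "inner (y - c) (u - c) \<le> 0" if u: "u \<in> C" for u
  proof -
    have "2 * inner (y - c) (u - c) \<le> t * (norm (u - c))\<^sup>2" if t: "0 < t" "t \<le> 1" for t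
    proof -
      have "c + t *\<^sub>R (u - c) \<in> C"
      proof -
        have "c + t *\<^sub>R (u - c) = (1 - t) *\<^sub>R c + t *\<^sub>R u" by (simp add: algebra_simps)
        moreover have "(1 - t) *\<^sub>R c + t *\<^sub>R u \<in> C" by (rule convexD[OF assms(2) cC u]) (use t in auto)
        ultimately show ?thesis by simp
      qed
      hence "(norm (y - c))\<^sup>2 \<le> (norm (y - (c + t *\<^sub>R (u - c))))\<^sup>2"
        using c[of "c + t *\<^sub>R (u - c)"] cC by (simp add: g_def)
      also have "\<dots> = (norm (y - c))\<^sup>2 - 2 * t * inner (y - c) (u - c) + t^2 * (norm (u - c))\<^sup>2"
      proof -
        have "y - (c + t *\<^sub>R (u - c)) = (y - c) - t *\<^sub>R (u - c)" by simp
        thus ?thesis by (simp only: norm_diff_scale)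
      qed
      finally have "t * (2 * inner (y - c) (u - c)) \<le> t * (t * (norm (u - c))\<^sup>2)"
        by (simp add: power2_eq_square)
      thus ?thesis using t by simp
    qed
    from le_small[OF this] show ?thesis by simp
  qed
  thus ?thesis using cC by blast
qed

lemma weakly_closed:
  fixes C :: "'a::{real_inner,complete_space} set"
  assumes "closed C" "convex C" "\<And>k. u k \<in> C" "weakly_converges u z"
  shows "z \<in> C"
proof (rule ccontr)
  assume zC: "z \<notin> C"
  have "C \<noteq> {}" using assms(3) by blast
  then obtain c where cC: "c \<in> C" and c: "\<And>v. v \<in> C \<Longrightarrow> inner (z - c) (v - c) \<le> 0"
    using proj_exists[OF assms(1,2)] by blast
  have "(\<lambda>k. inner (u k) (z - c)) \<longlonglongrightarrow> inner z (z - c)"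
    using assms(4) unfolding weakly_converges_def by blast
  hence "(\<lambda>k. inner (u k) (z - c) - inner c (z - c)) \<longlonglongrightarrow> inner z (z - c) - inner c (z - c)"
    by (intro tendsto_diff tendsto_const)
  moreover have "inner (u k) (z - c) - inner c (z - c) \<le> 0" for k
  proof -
    have "inner (z - c) (u k - c) \<le> 0" by (rule c[OF assms(3)[of k]])
    moreover have "inner (z - c) (u k - c) = inner (u k) (z - c) - inner c (z - c)"
      by (simp add: inner_diff_left inner_diff_right inner_commute)
    ultimately show ?thesis by simp
  qed
  ultimately have "inner z (z - c) - inner c (z - c) \<le> 0"
    by (intro LIMSEQ_le_const2) auto
  hence "inner (z - c) (z - c) \<le> 0" by (simp add: inner_diff_left)
  hence "z - c = 0" by (meson inner_eq_zero_iff inner_ge_zero order_antisym)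
  hence "z = c" by simp
  thus False using zC cC by simp
qed

lemma diag_inner:
  fixes x :: "nat \<Rightarrow> 'a::real_inner"
  assumes M: "\<And>n. norm (x n) \<le> M"
  shows "\<exists>r. strict_mono r \<and> (\<forall>m. convergent (\<lambda>k. inner (x (r k)) (x m)))"
proof -
  interpret S: subseqs "\<lambda>m s. convergent (\<lambda>k. inner (x (s k)) (x m))"
  proof
    fix m and s :: "nat \<Rightarrow> nat" assume "strict_mono s"
    have "bounded (range (\<lambda>k. inner (x (s k)) (x m)))"
    proof -
      have "norm (inner (x (s k)) (x m)) \<le> M * M" for k
      proof -
        have "norm (inner (x (s k)) (x m)) \<le> norm (x (s k)) * norm (x m)"
          by (simp add: Cauchy_Schwarz_ineq2)
        also have "\<dots> \<le> M * M" using M by (meson mult_mono norm_ge_zero order_trans)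
        finally show ?thesis .
      qed
      thus ?thesis by (auto simp: bounded_iff)
    qed
    then obtain l r' where "strict_mono r'" "((\<lambda>k. inner (x (s k)) (x m)) \<circ> r') \<longlonglongrightarrow> l"
      using bounded_imp_convergent_subsequence by blast
    thus "\<exists>r'. strict_mono r' \<and> convergent (\<lambda>k. inner (x ((s \<circ> r') k)) (x m))"
      by (auto simp: convergent_def o_def)
  qed
  have "convergent (\<lambda>k. inner (x (S.diagseq k)) (x m))" for m
  proof -
    have st: "convergent (\<lambda>k. inner (x ((s \<circ> r) k)) (x n))"
      if "strict_mono r" "convergent (\<lambda>k. inner (x (s k)) (x n))" for r s n
    proof -
      from that(2) obtain l where "(\<lambda>k. inner (x (s k)) (x n)) \<longlonglongrightarrow> l" by (auto simp: convergent_def)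
      from LIMSEQ_subseq_LIMSEQ[OF this that(1)] show ?thesis by (auto simp: convergent_def o_def)
    qed
    have "convergent (\<lambda>k. inner (x ((S.diagseq \<circ> (+) (Suc m)) k)) (x m))"
      by (rule S.diagseq_holds) (rule st)
    then obtain l where "(\<lambda>k. inner (x (S.diagseq (k + Suc m))) (x m)) \<longlonglongrightarrow> l"
      by (auto simp: convergent_def o_def add.commute)
    from LIMSEQ_offset[OF this] show ?thesis by (auto simp: convergent_def)
  qed
  thus ?thesis using S.subseq_diagseq by blast
qed

lemma lsc_cont:
  fixes \<phi> :: "'a::topological_space \<Rightarrow> real"
  assumes "continuous_on UNIV \<phi>"
  shows "closed {x. ereal (\<phi> x) \<le> c}"
proof -
  have "continuous_on UNIV (\<lambda>x. ereal (\<phi> x))" using assms by (intro continuous_on_ereal)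
  thus ?thesis using closed_Collect_le[of "\<lambda>x. ereal (\<phi> x)" "\<lambda>_. c"]
    by (simp add: continuous_on_const)
qed

lemma bl_add: "bounded_linear f \<Longrightarrow> f (x + y) = f x + f y"
  by (simp add: linear_add bounded_linear.linear)
lemma bl_diff: "bounded_linear f \<Longrightarrow> f (x - y) = f x - f y"
  by (simp add: linear_diff bounded_linear.linear)
lemma bl_scale: "bounded_linear f \<Longrightarrow> f (c *\<^sub>R x) = c *\<^sub>R f x"
  by (simp add: linear_scale bounded_linear.linear)
lemma bl_minus: "bounded_linear f \<Longrightarrow> f (- x) = - f x"
  by (simp add: linear_neg bounded_linear.linear)
lemma bl_zero: "bounded_linear f \<Longrightarrow> f 0 = 0"
  by (simp add: linear_0 bounded_linear.linear)

lemma quad_expand: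
  fixes M :: "'a::real_inner \<Rightarrow> 'a"
  assumes bl: "bounded_linear M" and sa: "\<And>x y. inner (M x) y = inner x (M y)"
  shows "inner (M (a + t *\<^sub>R b)) (a + t *\<^sub>R b) = inner (M a) a + 2 * t * inner (M a) b + t^2 * inner (M b) b"
proof -
  have "inner (M b) a = inner (M a) b" using sa[of b a] by (simp add: inner_commute)
  thus ?thesis
    by (simp add: bl_add[OF bl] bl_scale[OF bl] inner_add_left inner_add_right
        power2_eq_square algebra_simps)
qed

lemma quad_mid:
  fixes M :: "'a::real_inner \<Rightarrow> 'a"
  assumes bl: "bounded_linear M" and sa: "\<And>x y. inner (M x) y = inner x (M y)"
  shows "inner (M ((1/2) *\<^sub>R (a + b))) ((1/2) *\<^sub>R (a + b)) =
     (inner (M a) a + inner (M b) b)/2 - inner (M (a - b)) (a - b) / 4"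
proof -
  have "inner (M b) a = inner (M a) b" using sa[of b a] by (simp add: inner_commute)
  hence "inner (M (a - b)) (a - b) = inner (M a) a - 2 * inner (M a) b + inner (M b) b"
    by (simp add: bl_diff[OF bl] inner_diff_left inner_diff_right)
  moreover have "inner (M ((1/2) *\<^sub>R (a + b))) ((1/2) *\<^sub>R (a + b)) =
      (inner (M a) a + 2 * inner (M a) b + inner (M b) b) / 4"
    using \<open>inner (M b) a = inner (M a) b\<close>
    by (simp add: bl_add[OF bl] bl_scale[OF bl] inner_add_left inner_add_right; simp add: field_simps)
  ultimately show ?thesis by (simp add: field_simps)
qed

lemma lax_milgram:
  fixes L :: "'a::{real_inner,complete_space} \<Rightarrow> real" and M :: "'a \<Rightarrow> 'a"
  assumes lin: "\<And>u v. L (u + v) = L u + L v" "\<And>a u. L (a *\<^sub>R u) = a * L u"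
    and bd: "\<And>u. \<bar>L u\<bar> \<le> K * norm u"
    and Mbl: "bounded_linear M" and Msa: "\<And>x y. inner (M x) y = inner x (M y)"
    and Mco: "\<And>x. inner (M x) x \<ge> \<alpha> * (norm x)\<^sup>2" and \<alpha>: "\<alpha> > 0"
  shows "\<exists>z. \<forall>h. L h = inner (M z) h"
proof -
  define K' where "K' = \<bar>K\<bar>"
  have bd': "\<bar>L u\<bar> \<le> K' * norm u" for u
    using bd[of u] unfolding K'_def by (meson abs_ge_self mult_right_mono norm_ge_zero order_trans)
  have bl: "bounded_linear L"
    by (rule bounded_linear_intro[where K=K']) (use lin bd' in \<open>auto simp: mult.commute\<close>)
  define \<phi> where "\<phi> u = inner (M u) u / 2 - L u" for u
  have cont: "continuous_on UNIV \<phi>" unfolding \<phi>_def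
    by (intro continuous_intros linear_continuous_on[OF bl] linear_continuous_on[OF Mbl]) auto
  have bdd: "ereal (\<phi> u) \<ge> ereal (- (K' * K')/(2*\<alpha>))" for u
  proof -
    have "L u \<le> K' * norm u" using bd'[of u] by simp
    hence h1: "\<alpha> * L u \<le> \<alpha> * (K' * norm u)" using \<alpha> by simp
    have "0 \<le> (\<alpha> * norm u - K')^2" by simp
    hence h2: "2 * \<alpha> * (K' * norm u) \<le> K' * K' + \<alpha> * (\<alpha> * (norm u)\<^sup>2)"
      by (simp add: power2_diff power2_eq_square algebra_simps)
    have "\<alpha> * (norm u)\<^sup>2 \<le> inner (M u) u" by (rule Mco)
    hence h3: "\<alpha> * (\<alpha> * (norm u)\<^sup>2) \<le> \<alpha> * inner (M u) u" using \<alpha> by simp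
    have "2 * \<alpha> * L u \<le> K' * K' + \<alpha> * inner (M u) u" using h1 h2 h3 by linarith
    hence "- (K' * K')/(2*\<alpha>) \<le> inner (M u) u / 2 - L u"
      using \<alpha> by (simp add: field_simps)
    thus ?thesis by (simp add: \<phi>_def)
  qed
  have sc: "ereal (\<phi> ((1/2) *\<^sub>R (a + b))) \<le> ereal ((ra + rb)/2 - (\<alpha>/8) * (norm (a - b))\<^sup>2)"
    if "ereal (\<phi> a) = ereal ra" "ereal (\<phi> b) = ereal rb" for a b ra rb
  proof -
    have "L ((1/2) *\<^sub>R (a + b)) = (L a + L b)/2" using lin by simp
    hence "\<phi> ((1/2) *\<^sub>R (a + b)) = (\<phi> a + \<phi> b)/2 - inner (M (a - b)) (a - b) / 8"
      unfolding \<phi>_def quad_mid[OF Mbl Msa] by (simp add: field_simps)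
    moreover have "\<alpha> * (norm (a - b))\<^sup>2 \<le> inner (M (a - b)) (a - b)" by (rule Mco)
    ultimately show ?thesis using that by simp
  qed
  have ex: "\<exists>z. \<forall>x. ereal (\<phi> z) \<le> ereal (\<phi> x)"
  proof (rule min_exists[where c="\<alpha>/8", OF lsc_cont[OF cont] bdd])
    show "\<exists>x. ereal (\<phi> x) < \<infinity>" by simp
    show "0 < \<alpha>/8" using \<alpha> by simp
  next
    fix a b ra rb assume "ereal (\<phi> a) = ereal ra" "ereal (\<phi> b) = ereal rb"
    thus "ereal (\<phi> ((1/2) *\<^sub>R (a + b))) \<le> ereal ((ra + rb)/2 - (\<alpha>/8) * (norm (a - b))\<^sup>2)" by (rule sc)
  qed
  then obtain z where z: "\<And>x. ereal (\<phi> z) \<le> ereal (\<phi> x)" by blast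
  have one: "L h \<le> inner (M z) h" for h
  proof -
    have "L h - inner (M z) h \<le> 0"
    proof (rule le_small)
      fix t :: real assume t: "0 < t" "t \<le> 1"
      have "\<phi> z \<le> \<phi> (z + t *\<^sub>R h)" using z[of "z + t *\<^sub>R h"] by simp
      also have "\<phi> (z + t *\<^sub>R h) = \<phi> z + t * inner (M z) h + t^2 * inner (M h) h / 2 - t * L h"
        unfolding \<phi>_def quad_expand[OF Mbl Msa] lin by (simp add: field_simps)
      finally have "t * (L h - inner (M z) h) \<le> t * (t * (inner (M h) h / 2))"
        by (simp add: algebra_simps power2_eq_square)
      thus "L h - inner (M z) h \<le> t * (inner (M h) h / 2)" using t by simp
    qed
    thus ?thesis by simp
  qed
  have "L h = inner (M z) h" for h
  proof -
    have "L (-h) \<le> inner (M z) (-h)" by (rule one)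
    moreover have "L (-h) = - L h" using lin(2)[of "-1" h] by simp
    ultimately show ?thesis using one[of h] by simp
  qed
  thus ?thesis by blast
qed

lemma riesz:
  fixes L :: "'a::{real_inner,complete_space} \<Rightarrow> real"
  assumes lin: "\<And>u v. L (u + v) = L u + L v" "\<And>a u. L (a *\<^sub>R u) = a * L u"
    and bd: "\<And>u. \<bar>L u\<bar> \<le> K * norm u"
  shows "\<exists>z. \<forall>h. L h = inner z h"
  using lax_milgram[OF lin bd bounded_linear_ident, of 1] by (simp add: power2_norm_eq_inner)

lemma closure_span_add:
  fixes A :: "'a::real_normed_vector set"
  assumes "c \<in> closure (span A)" "w \<in> span A"
  shows "c + w \<in> closure (span A)"
proof -
  obtain s where s: "\<And>n. s n \<in> span A" "s \<longlonglongrightarrow> c" using assms(1) unfolding closure_sequential by blast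
  have "(\<lambda>n. s n + w) \<longlonglongrightarrow> c + w" by (intro tendsto_add s(2) tendsto_const)
  moreover have "s n + w \<in> span A" for n using s(1) assms(2) by (rule span_add)
  ultimately show ?thesis unfolding closure_sequential by (intro exI[of _ "\<lambda>n. s n + w"]) auto
qed

lemma weak_compact:
  fixes x :: "nat \<Rightarrow> 'a::{real_inner,complete_space}"
  assumes M: "\<And>n. norm (x n) \<le> M"
  shows "\<exists>r z. strict_mono r \<and> weakly_converges (x \<circ> r) z"
proof -
  obtain r where r: "strict_mono r" "\<And>m. convergent (\<lambda>k. inner (x (r k)) (x m))"
    using diag_inner[of x M, OF M] by blast
  define y where "y k = x (r k)" for k
  define M' where "M' = \<bar>M\<bar> + 1"
  have M'pos: "M' > 0" unfolding M'_def by simp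
  have yM: "norm (y k) \<le> M'" for k using M[of "r k"] unfolding y_def M'_def by simp
  define V where "V = {v. convergent (\<lambda>k. inner (y k) v)}"
  have subV: "subspace V"
    unfolding subspace_def V_def mem_Collect_eq
  proof (intro conjI ballI allI)
    show "convergent (\<lambda>k. inner (y k) 0)" by (simp add: convergent_const)
  next
    fix u v assume "u \<in> {v. convergent (\<lambda>k. inner (y k) v)}" "v \<in> {v. convergent (\<lambda>k. inner (y k) v)}"
    hence "convergent (\<lambda>k. inner (y k) u + inner (y k) v)" by (simp add: convergent_add)
    thus "convergent (\<lambda>k. inner (y k) (u + v))" by (simp add: inner_add_right)
  next
    fix c :: real and v assume "v \<in> {v. convergent (\<lambda>k. inner (y k) v)}"
    hence "convergent (\<lambda>k. c * inner (y k) v)" by (simp add: convergent_mult convergent_const)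
    thus "convergent (\<lambda>k. inner (y k) (c *\<^sub>R v))" by simp
  qed
  have rangeV: "range x \<subseteq> V" using r(2) unfolding V_def y_def by auto
  have spanV: "span (range x) \<subseteq> V" by (rule span_minimal[OF rangeV subV])
  have closedV: "closed V"
    unfolding closed_sequential_limits
  proof (intro allI impI, elim conjE)
    fix vs v assume vs: "\<forall>n. vs n \<in> V" "vs \<longlonglongrightarrow> v"
    have "Cauchy (\<lambda>k. inner (y k) v)"
    proof (rule metric_CauchyI)
      fix e :: real assume e: "e > 0"
      have "e / (4 * M') > 0" using M'pos e by simp
      then obtain no where "\<forall>n\<ge>no. norm (vs n - v) < e / (4 * M')"
        using vs(2) unfolding LIMSEQ_iff by blast
      then obtain i where i: "norm (vs i - v) < e / (4 * M')" by blast
      have "convergent (\<lambda>k. inner (y k) (vs i))" using vs(1) unfolding V_def by auto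
      hence "Cauchy (\<lambda>k. inner (y k) (vs i))" by (rule convergent_Cauchy)
      then obtain N where N: "\<And>m n. m \<ge> N \<Longrightarrow> n \<ge> N \<Longrightarrow> dist (inner (y m) (vs i)) (inner (y n) (vs i)) < e/2"
        using e by (meson half_gt_zero metric_CauchyD)
      have "dist (inner (y m) v) (inner (y n) v) < e" if "m \<ge> N" "n \<ge> N" for m n
      proof -
        have split: "inner (y m) v - inner (y n) v = (inner (y m) (vs i) - inner (y n) (vs i)) - inner (y m - y n) (vs i - v)"
          by (simp add: inner_diff_left inner_diff_right)
        have "\<bar>inner (y m - y n) (vs i - v)\<bar> \<le> norm (y m - y n) * norm (vs i - v)"
          by (rule Cauchy_Schwarz_ineq2)
        also have "\<dots> \<le> (2 * M') * norm (vs i - v)"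
        proof (rule mult_right_mono)
          have "norm (y m - y n) \<le> norm (y m) + norm (y n)" by (rule norm_triangle_ineq4)
          thus "norm (y m - y n) \<le> 2 * M'" using yM[of m] yM[of n] by simp
        qed simp
        also have "\<dots> \<le> (2 * M') * (e / (4 * M'))" using i M'pos by (intro mult_left_mono) auto
        also have "\<dots> = e/2" using M'pos by simp
        finally have h1: "\<bar>inner (y m - y n) (vs i - v)\<bar> \<le> e/2" .
        have h2: "\<bar>inner (y m) (vs i) - inner (y n) (vs i)\<bar> < e/2" using N[OF that] by (simp add: dist_real_def)
        have "\<bar>inner (y m) v - inner (y n) v\<bar> < e" unfolding split using h1 h2 by linarith
        thus ?thesis by (simp add: dist_real_def)
      qed
      thus "\<exists>N. \<forall>m\<ge>N. \<forall>n\<ge>N. dist (inner (y m) v) (inner (y n) v) < e" by blast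
    qed
    thus "v \<in> V" unfolding V_def by (simp add: Cauchy_convergent_iff)
  qed
  define S where "S = closure (span (range x))"
  have clV: "S \<subseteq> V" unfolding S_def by (rule closure_minimal[OF spanV closedV])
  have Scc: "closed S" "convex S" "S \<noteq> {}" unfolding S_def
    using span_zero[of "range x"] by (auto intro: subspace_imp_convex)
  have yS: "y k \<in> span (range x)" for k unfolding y_def by (simp add: span_base)
  have allconv: "convergent (\<lambda>k. inner (y k) v)" for v
  proof -
    obtain c where cS: "c \<in> S" and c: "\<And>u. u \<in> S \<Longrightarrow> inner (v - c) (u - c) \<le> 0"
      using proj_exists[OF Scc] by blast
    have orth: "inner (y k) (v - c) = 0" for k
    proof -
      have "c + y k \<in> S" using closure_span_add[OF _ yS] cS unfolding S_def by blast
      from c[OF this] have a: "inner (v - c) (y k) \<le> 0" by simp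
      have "- y k \<in> span (range x)" using yS by (rule span_neg)
      hence "c + - y k \<in> S" using closure_span_add cS unfolding S_def by blast
      from c[OF this] have b: "inner (v - c) (- y k) \<le> 0" by simp
      show ?thesis using a b by (simp add: inner_commute)
    qed
    have "inner (y k) v = inner (y k) c" for k using orth[of k] by (simp add: inner_diff_right)
    moreover have "convergent (\<lambda>k. inner (y k) c)" using clV cS unfolding V_def by auto
    ultimately show ?thesis by simp
  qed
  define L where "L v = lim (\<lambda>k. inner (y k) v)" for v
  have Lt: "(\<lambda>k. inner (y k) v) \<longlonglongrightarrow> L v" for v
    unfolding L_def using allconv convergent_LIMSEQ_iff by blast
  have Ladd: "L (u + v) = L u + L v" for u v
  proof -
    have "(\<lambda>k. inner (y k) (u + v)) \<longlonglongrightarrow> L u + L v"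
      unfolding inner_add_right by (intro tendsto_add Lt)
    thus ?thesis using Lt[of "u+v"] LIMSEQ_unique by blast
  qed
  have Lscale: "L (a *\<^sub>R u) = a * L u" for a u
  proof -
    have "(\<lambda>k. inner (y k) (a *\<^sub>R u)) \<longlonglongrightarrow> a * L u"
      by (simp, intro tendsto_mult tendsto_const Lt)
    thus ?thesis using Lt[of "a *\<^sub>R u"] LIMSEQ_unique by blast
  qed
  have Lbd: "\<bar>L u\<bar> \<le> M' * norm u" for u
  proof -
    have "(\<lambda>k. \<bar>inner (y k) u\<bar>) \<longlonglongrightarrow> \<bar>L u\<bar>" by (intro tendsto_rabs Lt)
    moreover have "\<bar>inner (y k) u\<bar> \<le> M' * norm u" for k
    proof -
      have "\<bar>inner (y k) u\<bar> \<le> norm (y k) * norm u" by (rule Cauchy_Schwarz_ineq2)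
      also have "\<dots> \<le> M' * norm u" using yM[of k] by (simp add: mult_right_mono)
      finally show ?thesis .
    qed
    ultimately show ?thesis by (intro LIMSEQ_le_const2) auto
  qed
  obtain z where z: "\<And>h. L h = inner z h" using riesz[OF Ladd Lscale Lbd] by blast
  have "weakly_converges (x \<circ> r) z"
    unfolding weakly_converges_def
  proof
    fix h
    have "(\<lambda>k. inner (y k) h) \<longlonglongrightarrow> inner z h" using Lt[of h] z[of h] by simp
    thus "(\<lambda>n. inner ((x \<circ> r) n) h) \<longlonglongrightarrow> inner z h" unfolding y_def by (simp add: o_def)
  qed
  thus ?thesis using r(1) by blast
qed

lemma quad_disc:
  fixes a b c :: real
  assumes "a \<ge> 0" "c \<ge> 0" "\<And>s. 0 \<le> a + 2 * s * b + s^2 * c"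
  shows "b^2 \<le> a * c"
proof (cases "c > 0")
  case True
  have "0 \<le> a + 2 * (-b/c) * b + (-b/c)^2 * c" by (rule assms(3))
  also have "\<dots> = a - b^2/c" using True by (simp add: power2_eq_square field_simps)
  finally show ?thesis using True by (simp add: field_simps)
next
  case False
  hence c0: "c = 0" using assms(2) by simp
  show ?thesis
  proof (cases "b = 0")
    case True thus ?thesis using assms c0 by simp
  next
    case False
    have "0 \<le> a + 2 * (-(a+1)/(2*b)) * b + (-(a+1)/(2*b))^2 * c" by (rule assms(3))
    also have "\<dots> = -1" using False c0 by (simp add: field_simps)
    finally show ?thesis by simp
  qed
qed

lemma gen_cs:
  fixes T :: "'a::real_inner \<Rightarrow> 'a"
  assumes bl: "bounded_linear T" and sa: "\<And>x y. inner (T x) y = inner x (T y)"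
    and pos: "\<And>x. inner (T x) x \<ge> 0"
  shows "(inner (T x) y)^2 \<le> inner (T x) x * inner (T y) y"
proof (rule quad_disc[OF pos pos])
  fix s :: real
  have "0 \<le> inner (T (x + s *\<^sub>R y)) (x + s *\<^sub>R y)" by (rule pos)
  also have "\<dots> = inner (T x) x + 2 * s * inner (T x) y + s^2 * inner (T y) y"
    by (rule quad_expand[OF bl sa])
  finally show "0 \<le> inner (T x) x + 2 * s * inner (T x) y + s^2 * inner (T y) y" .
qed

lemma pos_norm_bound:
  fixes T :: "'a::real_inner \<Rightarrow> 'a"
  assumes bl: "bounded_linear T" and sa: "\<And>x y. inner (T x) y = inner x (T y)"
    and pos: "\<And>x. inner (T x) x \<ge> 0" and K: "\<And>y. norm (T y) \<le> K * norm y"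
  shows "(norm (T x))^2 \<le> K * inner (T x) x"
proof -
  define n where "n = (norm (T x))^2"
  define a where "a = inner (T x) x"
  have a0: "a \<ge> 0" unfolding a_def by (rule pos)
  have "n^2 \<le> a * inner (T (T x)) (T x)"
    using gen_cs[OF bl sa pos, of x "T x"] unfolding n_def a_def by (simp add: power2_norm_eq_inner)
  also have "inner (T (T x)) (T x) \<le> K * n"
  proof -
    have "inner (T (T x)) (T x) \<le> norm (T (T x)) * norm (T x)" by (rule norm_cauchy_schwarz)
    also have "\<dots> \<le> (K * norm (T x)) * norm (T x)" using K[of "T x"] by (simp add: mult_right_mono)
    finally show ?thesis unfolding n_def by (simp add: power2_eq_square mult.assoc)
  qed
  hence "a * inner (T (T x)) (T x) \<le> a * (K * n)" using a0 by (rule mult_left_mono)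
  finally have h: "n * n \<le> (K * a) * n" by (simp add: power2_eq_square algebra_simps)
  have "n \<le> K * a"
  proof (cases "n = 0")
    case True
    have "0 \<le> K * a"
    proof (cases "x = 0")
      case True thus ?thesis unfolding a_def by (simp add: bl_zero[OF bl])
    next
      case False
      have "0 \<le> norm (T x)" by simp
      also have "\<dots> \<le> K * norm x" by (rule K)
      finally have "K \<ge> 0" using False by (simp add: zero_le_mult_iff)
      thus ?thesis using a0 by simp
    qed
    thus ?thesis using True by simp
  next
    case False hence "n > 0" unfolding n_def by simp
    thus ?thesis using h by simp
  qed
  thus ?thesis unfolding n_def a_def .
qed

context
  fixes M :: "'a::{real_inner,complete_space} \<Rightarrow> 'a" and \<alpha> :: real
  assumes MP: "M \<in> P_alpha \<alpha>" and \<alpha>: "\<alpha> > 0"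
begin

lemma P_bl: "bounded_linear M" using MP unfolding P_alpha_def by blast
lemma P_sa: "inner (M x) y = inner x (M y)" using MP unfolding P_alpha_def by blast
lemma P_co: "inner (M x) x \<ge> \<alpha> * (norm x)\<^sup>2" using MP unfolding P_alpha_def by blast
lemma P_pos: "inner (M x) x \<ge> 0"
  using P_co[of x] \<alpha> by (meson mult_nonneg_nonneg order_trans less_imp_le zero_le_power2)

lemma P_normlow: "\<alpha> * norm x \<le> norm (M x)"
proof (cases "x = 0")
  case True thus ?thesis by (simp add: bl_zero[OF P_bl])
next
  case False
  have "\<alpha> * (norm x)\<^sup>2 \<le> inner (M x) x" by (rule P_co)
  also have "\<dots> \<le> norm (M x) * norm x" by (rule norm_cauchy_schwarz)
  finally have "(\<alpha> * norm x) * norm x \<le> norm (M x) * norm x" by (simp add: power2_eq_square mult.assoc)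
  thus ?thesis using False by simp
qed

lemma P_inj: "inj M"
proof (rule injI)
  fix x y assume "M x = M y"
  hence "M (x - y) = 0" by (simp add: bl_diff[OF P_bl])
  hence "\<alpha> * norm (x - y) \<le> 0" using P_normlow[of "x - y"] by simp
  thus "x = y" using \<alpha> by (simp add: mult_le_0_iff)
qed

lemma P_surj: "surj M"
proof -
  have "\<exists>z. M z = b" for b
  proof -
    obtain z where z: "\<And>h. inner b h = inner (M z) h"
      using lax_milgram[of "\<lambda>h. inner b h" "norm b", OF _ _ _ P_bl P_sa P_co \<alpha>]
      by (auto simp: inner_add_right Cauchy_Schwarz_ineq2)
    have "inner (b - M z) (b - M z) = 0" using z[of "b - M z"] by (simp add: inner_diff_left)
    thus ?thesis by auto
  qed
  thus ?thesis by (metis surjI)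
qed

lemma P_inv1: "M (inv M y) = y" using P_surj by (simp add: surj_f_inv_f)
lemma P_inv2: "inv M (M x) = x" using P_inj by simp

lemma P_inv_bl: "bounded_linear (inv M)"
proof (rule bounded_linear_intro[where K="1/\<alpha>"])
  fix x y
  have "M (inv M x + inv M y) = x + y" by (simp add: bl_add[OF P_bl] P_inv1)
  thus "inv M (x + y) = inv M x + inv M y" by (metis P_inv2)
next
  fix r x
  have "M (r *\<^sub>R inv M x) = r *\<^sub>R x" by (simp add: bl_scale[OF P_bl] P_inv1)
  thus "inv M (r *\<^sub>R x) = r *\<^sub>R inv M x" by (metis P_inv2)
next
  fix x
  have "\<alpha> * norm (inv M x) \<le> norm x" using P_normlow[of "inv M x"] by (simp add: P_inv1)
  thus "norm (inv M x) \<le> norm x * (1/\<alpha>)" using \<alpha> by (simp add: field_simps)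
qed

lemma P_inv_norm: "norm (inv M x) \<le> (1/\<alpha>) * norm x"
proof -
  have "\<alpha> * norm (inv M x) \<le> norm x" using P_normlow[of "inv M x"] by (simp add: P_inv1)
  thus ?thesis using \<alpha> by (simp add: field_simps)
qed

lemma P_inv_sa: "inner (inv M x) y = inner x (inv M y)"
proof -
  have "inner (inv M x) y = inner (inv M x) (M (inv M y))" by (simp add: P_inv1)
  also have "\<dots> = inner (M (inv M x)) (inv M y)" by (simp add: P_sa)
  finally show ?thesis by (simp add: P_inv1)
qed

lemma P_inv_pos: "inner (inv M x) x \<ge> 0"
proof -
  have "inner (inv M x) x = inner (M (inv M x)) (inv M x)" by (simp add: P_inv1 inner_commute)
  thus ?thesis using P_pos by simp
qed

lemma P_inv_low: "(norm x)\<^sup>2 \<le> onorm M * inner (inv M x) x"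
proof -
  have "(norm (M (inv M x)))\<^sup>2 \<le> onorm M * inner (M (inv M x)) (inv M x)"
    by (rule pos_norm_bound[OF P_bl P_sa P_pos]) (rule onorm[OF P_bl])
  thus ?thesis by (simp add: P_inv1 inner_commute)
qed

end

lemma inv_order:
  fixes A B WA WB :: "'a::real_inner \<Rightarrow> 'a"
  assumes Bbl: "bounded_linear B" and Bsa: "\<And>x y. inner (B x) y = inner x (B y)"
    and Bpos: "\<And>x. inner (B x) x \<ge> 0"
    and AB: "\<And>u. inner (A u) u \<ge> inner (B u) u"
    and WA: "\<And>x. A (WA x) = x" and WB: "\<And>x. B (WB x) = x"
    and WApos: "inner (WA x) x \<ge> 0"
  shows "inner (WA x) x \<le> inner (WB x) x"
proof -
  define u where "u = WA x"
  define v where "v = WB x"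
  define a where "a = inner u x"
  define b where "b = inner v x"
  have a0: "a \<ge> 0" unfolding a_def u_def by (rule WApos)
  have "a = inner u (B v)" unfolding a_def v_def by (simp add: WB)
  also have "\<dots> = inner (B u) v" by (simp add: Bsa)
  finally have e: "a = inner (B u) v" .
  have "a^2 \<le> inner (B u) u * inner (B v) v" unfolding e by (rule gen_cs[OF Bbl Bsa Bpos])
  also have "inner (B v) v = b" unfolding b_def v_def by (simp add: WB inner_commute)
  also have "inner (B u) u \<le> a" using AB[of u] unfolding a_def u_def by (simp add: WA inner_commute)
  hence "inner (B u) u * b \<le> a * b"
    using Bpos[of v] \<open>inner (B v) v = b\<close> by (simp add: mult_right_mono)
  finally have h: "a * a \<le> a * b" by (simp add: power2_eq_square)
  have "a \<le> b"
  proof (cases "a = 0")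
    case True thus ?thesis using Bpos[of v] \<open>inner (B v) v = b\<close> by simp
  next
    case False thus ?thesis using h a0 by simp
  qed
  thus ?thesis unfolding a_def b_def u_def v_def .
qed

lemma aux_div: fixes p s a e :: real
  shows "p > 0 \<Longrightarrow> s > 0 \<Longrightarrow> (s * a - e)/(p * s) = a/p - e/(p * s)"
  by (simp add: field_simps)

context
  fixes \<eta> :: "nat \<Rightarrow> real"
  assumes \<eta>0: "\<And>n. \<eta> n \<ge> 0" and \<eta>s: "summable \<eta>"
begin

definition pp :: "nat \<Rightarrow> real" where "pp n = (\<Prod>k<n. 1 + \<eta> k)"

lemma pp_Suc: "pp (Suc n) = pp n * (1 + \<eta> n)" by (simp add: pp_def)

lemma pp_ge1: "pp n \<ge> 1"
  unfolding pp_def by (rule prod_ge_1) (use \<eta>0 in auto)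

lemma pp_pos: "pp n > 0" using pp_ge1[of n] by simp

lemma pp_le: "pp n \<le> exp (suminf \<eta>)"
proof -
  have "pp n \<le> (\<Prod>k<n. exp (\<eta> k))"
    unfolding pp_def by (rule prod_mono) (use \<eta>0 exp_ge_add_one_self in \<open>auto simp: add.commute\<close>)
  also have "\<dots> = exp (\<Sum>k<n. \<eta> k)" by (simp add: exp_sum)
  also have "\<dots> \<le> exp (suminf \<eta>)" using sum_le_suminf[OF \<eta>s, of "{..<n}"] \<eta>0 by simp
  finally show ?thesis .
qed

lemma pp_mono: "pp n \<le> pp (Suc n)"
  using pp_Suc[of n] pp_pos[of n] \<eta>0[of n] by (simp add: algebra_simps)

lemma pp_conv: "convergent pp"
proof -
  have "incseq pp" by (rule incseq_SucI) (rule pp_mono)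
  moreover have "Bseq pp"
  proof (rule BseqI'[where K="exp (suminf \<eta>)"])
    fix n show "norm (pp n) \<le> exp (suminf \<eta>)" using pp_le[of n] pp_pos[of n] by simp
  qed
  ultimately show ?thesis using Bseq_monoseq_convergent incseq_imp_monoseq by blast
qed

lemma qfejer:
  fixes a d :: "nat \<Rightarrow> real" and c :: real
  assumes c: "c > 0" and a0: "\<And>n. a n \<ge> 0" and d0: "\<And>n. d n \<ge> 0"
    and rec: "\<And>n. a (Suc n) \<le> (1 + \<eta> n) * a n - c * d n"
  shows "convergent a" "summable d"
proof -
  define P where "P = exp (suminf \<eta>)"
  have P: "P > 0" unfolding P_def by simp
  define b where "b n = a n / pp n" for n
  have b0: "b n \<ge> 0" for n unfolding b_def using a0[of n] pp_pos[of n] by simp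
  have step: "c * d n / P \<le> b n - b (Suc n)" for n
  proof -
    have "b (Suc n) \<le> ((1 + \<eta> n) * a n - c * d n) / pp (Suc n)"
      unfolding b_def using rec[of n] pp_pos[of "Suc n"] by (simp add: divide_right_mono)
    also have "\<dots> = b n - c * d n / pp (Suc n)"
      unfolding b_def pp_Suc using pp_pos[of n] \<eta>0[of n] by (intro aux_div) auto
    finally have "c * d n / pp (Suc n) \<le> b n - b (Suc n)" by simp
    moreover have "c * d n / P \<le> c * d n / pp (Suc n)"
      using pp_le[of "Suc n"] pp_pos[of "Suc n"] c d0[of n] unfolding P_def
      by (intro divide_left_mono) auto
    ultimately show ?thesis by simp
  qed
  have bdec: "b (Suc n) \<le> b n" for n
    using step[of n] c d0[of n] P by (smt (verit) divide_nonneg_pos mult_nonneg_nonneg)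
  have "decseq b" by (rule decseq_SucI) (rule bdec)
  moreover have "Bseq b"
  proof (rule BseqI'[where K="b 0"])
    fix n show "norm (b n) \<le> b 0" using b0[of n] \<open>decseq b\<close> by (simp add: decseq_def)
  qed
  ultimately have bc: "convergent b" using Bseq_monoseq_convergent decseq_imp_monoseq by blast
  have "a n = pp n * b n" for n unfolding b_def using pp_pos[of n] by simp
  hence "a = (\<lambda>n. pp n * b n)" by auto
  thus "convergent a" using pp_conv bc by (simp add: convergent_mult)
  have "(\<Sum>k<n. c * d k / P) \<le> b 0" for n
  proof -
    have "(\<Sum>k<n. c * d k / P) \<le> (\<Sum>k<n. b k - b (Suc k))" by (rule sum_mono) (rule step)
    also have "\<dots> = b 0 - b n" by (rule sum_lessThan_telescope')
    finally show ?thesis using b0[of n] by simp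
  qed
  hence "summable (\<lambda>k. c * d k / P)"
    by (intro summableI_nonneg_bounded[where x="b 0"]) (use c d0 P in auto)
  hence "summable (\<lambda>k. (P / c) * (c * d k / P))" by (rule summable_mult)
  moreover have "(\<lambda>k. (P / c) * (c * d k / P)) = d" using c P by (auto simp: field_simps)
  ultimately show "summable d" by metis
qed

lemma metric_conv:
  fixes W :: "nat \<Rightarrow> 'a::{real_inner,complete_space} \<Rightarrow> 'a"
  assumes bl: "\<And>n. bounded_linear (W n)" and sa: "\<And>n x y. inner (W n x) y = inner x (W n y)"
    and pos: "\<And>n x. inner (W n x) x \<ge> 0" and bd: "\<And>n y. norm (W n y) \<le> C * norm y"
    and mono: "\<And>n x. inner (W (Suc n) x) x \<le> (1 + \<eta> n) * inner (W n x) x"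
  shows "convergent (\<lambda>n. W n x)"
proof -
  define V where "V n y = (1 / pp n) *\<^sub>R W n y" for n y
  define q where "q n z = inner (V n z) z" for n z
  have qdec: "q (Suc n) z \<le> q n z" for n z
  proof -
    have "q (Suc n) z = inner (W (Suc n) z) z / pp (Suc n)" unfolding q_def V_def by simp
    also have "\<dots> \<le> (1 + \<eta> n) * inner (W n z) z / pp (Suc n)"
      using mono[of n z] pp_pos[of "Suc n"] by (simp add: divide_right_mono)
    also have "\<dots> = q n z"
    proof -
      have "1 + \<eta> n > 0" using \<eta>0[of n] by simp
      thus ?thesis unfolding q_def V_def pp_Suc using pp_pos[of n] by simp
    qed
    finally show ?thesis .
  qed
  have qdecseq: "decseq (\<lambda>n. q n z)" for z by (rule decseq_SucI) (rule qdec)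
  have q0: "q n z \<ge> 0" for n z unfolding q_def V_def using pos[of n z] pp_pos[of n] by simp
  define K where "K = 2 * \<bar>C\<bar> + 1"
  have K: "K > 0" unfolding K_def by simp
  have Vbd: "norm (V n y) \<le> \<bar>C\<bar> * norm y" for n y
  proof -
    have "norm (V n y) = norm (W n y) / pp n" unfolding V_def using pp_pos[of n] by simp
    also have "\<dots> \<le> norm (W n y)"
    proof -
      have "norm (W n y) * 1 \<le> norm (W n y) * pp n" using pp_ge1[of n] by (intro mult_left_mono) auto
      thus ?thesis using pp_pos[of n] by (simp add: divide_le_eq)
    qed
    also have "\<dots> \<le> C * norm y" by (rule bd)
    also have "\<dots> \<le> \<bar>C\<bar> * norm y" by (simp add: mult_right_mono)
    finally show ?thesis .
  qed
  have Vbl: "bounded_linear (V n)" for n unfolding V_def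
    by (intro bounded_linear_const_scaleR bl)
  have key: "(norm (V n x - V m x))\<^sup>2 \<le> K * (q n x - q m x)" if "n \<le> m" for n m
  proof -
    define T where "T y = V n y - V m y" for y
    have Tbl: "bounded_linear T" unfolding T_def by (intro bounded_linear_sub Vbl)
    have Tsa: "inner (T y) z = inner y (T z)" for y z
      unfolding T_def V_def using sa[of n y z] sa[of m y z] by (simp add: inner_diff_left inner_diff_right)
    have Tpos: "inner (T y) y \<ge> 0" for y
      using qdecseq[of y] that unfolding T_def decseq_def q_def by (simp add: inner_diff_left)
    have Tbd: "norm (T y) \<le> K * norm y" for y
    proof -
      have "norm (T y) \<le> norm (V n y) + norm (V m y)" unfolding T_def by (rule norm_triangle_ineq4)
      also have "\<dots> \<le> 2 * \<bar>C\<bar> * norm y" using Vbd[of n y] Vbd[of m y] by simp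
      also have "\<dots> \<le> K * norm y" unfolding K_def by (simp add: mult_right_mono)
      finally show ?thesis .
    qed
    have "(norm (T x))\<^sup>2 \<le> K * inner (T x) x" by (rule pos_norm_bound[OF Tbl Tsa Tpos Tbd])
    thus ?thesis unfolding T_def q_def by (simp add: inner_diff_left)
  qed
  have "convergent (\<lambda>n. q n x)"
  proof -
    have "Bseq (\<lambda>n. q n x)"
    proof (rule BseqI'[where K="q 0 x"])
      fix n show "norm (q n x) \<le> q 0 x" using q0[of n x] qdecseq[of x] by (simp add: decseq_def)
    qed
    thus ?thesis using Bseq_monoseq_convergent decseq_imp_monoseq qdecseq by blast
  qed
  hence qC: "Cauchy (\<lambda>n. q n x)" by (rule convergent_Cauchy)
  have "Cauchy (\<lambda>n. V n x)"
  proof (rule metric_CauchyI)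
    fix e :: real assume e: "e > 0"
    have "e^2 / K > 0" using e K by simp
    then obtain N where N: "\<And>m n. m \<ge> N \<Longrightarrow> n \<ge> N \<Longrightarrow> dist (q m x) (q n x) < e^2 / K"
      using qC metric_CauchyD by blast
    have *: "dist (V n x) (V m x) < e" if "n \<ge> N" "m \<ge> N" "n \<le> m" for n m
    proof -
      have "(norm (V n x - V m x))\<^sup>2 \<le> K * (q n x - q m x)" by (rule key[OF that(3)])
      also have "\<dots> < K * (e^2 / K)"
        using N[OF that(1,2)] K by (intro mult_strict_left_mono) (auto simp: dist_real_def)
      also have "\<dots> = e^2" using K by simp
      finally have "(norm (V n x - V m x))\<^sup>2 < e^2" .
      hence "norm (V n x - V m x) < e" using e by (simp add: power_less_imp_less_base)
      thus ?thesis by (simp add: dist_norm)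
    qed
    have "dist (V n x) (V m x) < e" if "n \<ge> N" "m \<ge> N" for n m
    proof (cases "n \<le> m")
      case True thus ?thesis using * that by blast
    next
      case False thus ?thesis using *[of m n] that by (simp add: dist_commute)
    qed
    thus "\<exists>N. \<forall>m\<ge>N. \<forall>n\<ge>N. dist (V m x) (V n x) < e" by blast
  qed
  hence "convergent (\<lambda>n. V n x)" by (simp add: Cauchy_convergent_iff)
  then obtain l where l: "(\<lambda>n. V n x) \<longlonglongrightarrow> l" by (auto simp: convergent_def)
  obtain P where P: "pp \<longlonglongrightarrow> P" using pp_conv by (auto simp: convergent_def)
  have "(\<lambda>n. pp n *\<^sub>R V n x) \<longlonglongrightarrow> P *\<^sub>R l" by (intro tendsto_scaleR P l)
  moreover have "pp n *\<^sub>R V n x = W n x" for n unfolding V_def using pp_pos[of n] by simp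
  ultimately show ?thesis by (auto simp: convergent_def)
qed

end

lemma argmin_is_min:
  fixes g :: "'a \<Rightarrow> 'b::linorder"
  assumes "\<exists>z. \<forall>x. g z \<le> g x"
  shows "g (ARG_MIN g z. True) \<le> g x"
proof -
  obtain z where z: "\<And>x. g z \<le> g x" using assms by blast
  show ?thesis
    by (rule arg_minI[where P="\<lambda>_. True" and f=g and x=z]) (use z in \<open>auto simp: not_less\<close>)
qed

lemma conv_real:
  assumes "convex_fun f" "f a = ereal ra" "f b = ereal rb" "0 \<le> t" "t \<le> 1"
  shows "f ((1 - t) *\<^sub>R a + t *\<^sub>R b) \<le> ereal ((1 - t) * ra + t * rb)"
proof -
  have "f ((1 - t) *\<^sub>R a + t *\<^sub>R b) \<le> ereal (1 - t) * f a + ereal t * f b"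
    using assms(1,4,5) unfolding convex_fun_def by blast
  thus ?thesis using assms(2,3) by simp
qed

lemma sublevel_convex:
  assumes "convex_fun f" "proper_fun f"
  shows "convex {v. f v \<le> ereal c}"
proof (rule convexI)
  fix a b :: 'a and u v :: real
  assume a: "a \<in> {v. f v \<le> ereal c}" and b: "b \<in> {v. f v \<le> ereal c}" and u: "0 \<le> u" and v: "0 \<le> v" and uv: "u + v = 1"
  have "f a \<noteq> -\<infinity>" "f b \<noteq> -\<infinity>" using assms(2) unfolding proper_fun_def by auto
  moreover have "f a \<noteq> \<infinity>" "f b \<noteq> \<infinity>" using a b by auto
  ultimately obtain ra rb where ra: "f a = ereal ra" and rb: "f b = ereal rb" by (meson ereal_cases)
  have ra': "ra \<le> c" "rb \<le> c" using a b ra rb by auto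
  have "f ((1 - v) *\<^sub>R a + v *\<^sub>R b) \<le> ereal ((1 - v) * ra + v * rb)"
    by (rule conv_real[OF assms(1) ra rb v]) (use u uv in auto)
  also have "(1 - v) * ra + v * rb \<le> (1 - v) * c + v * c"
    using ra' u v uv by (intro add_mono mult_left_mono) auto
  finally have "f ((1 - v) *\<^sub>R a + v *\<^sub>R b) \<le> ereal c" by (simp add: algebra_simps)
  moreover have "1 - v = u" using uv by simp
  ultimately show "u *\<^sub>R a + v *\<^sub>R b \<in> {v. f v \<le> ereal c}" by simp
qed

lemma Mnorm_sq:
  assumes "inner (W v) v \<ge> 0"
  shows "(M_norm W v)\<^sup>2 = inner (W v) v"
  using assms unfolding M_norm_def by simp

lemma lsc_plus_cont:
  fixes f :: "'a::{real_normed_vector} \<Rightarrow> ereal" and Q :: "'a \<Rightarrow> real"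
  assumes lsc: "lsc_fun f" and pr: "\<And>x. f x \<noteq> -\<infinity>" and Q: "continuous_on UNIV Q"
  shows "closed {x. f x + ereal (Q x) \<le> c}"
proof (cases c)
  case PInf thus ?thesis by simp
next
  case MInf
  have "{x. f x + ereal (Q x) \<le> c} = {}" using MInf pr by auto
  thus ?thesis by simp
next
  case (real r)
  show ?thesis unfolding closed_sequential_limits
  proof (intro allI impI, elim conjE)
    fix zs z assume zs: "\<forall>n. zs n \<in> {x. f x + ereal (Q x) \<le> c}" "zs \<longlonglongrightarrow> z"
    have Qt: "(\<lambda>n. Q (zs n)) \<longlonglongrightarrow> Q z"
      by (rule continuous_on_tendsto_compose[OF Q zs(2)]) auto
    have fz: "f z \<le> ereal (r - Q z + \<delta>)" if d: "\<delta> > 0" for \<delta>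
    proof -
      obtain N where N: "\<And>n. n \<ge> N \<Longrightarrow> \<bar>Q (zs n) - Q z\<bar> < \<delta>"
        using Qt d unfolding LIMSEQ_iff by (auto simp: real_norm_def)
      have "f (zs (n + N)) \<le> ereal (r - Q z + \<delta>)" for n
      proof -
        have "f (zs (n + N)) + ereal (Q (zs (n + N))) \<le> ereal r" using zs(1) real by auto
        hence "f (zs (n + N)) \<le> ereal (r - Q (zs (n + N)))"
          by (cases "f (zs (n + N))") auto
        also have "r - Q (zs (n + N)) \<le> r - Q z + \<delta>" using N[of "n + N"] by simp
        finally show ?thesis by simp
      qed
      moreover have "(\<lambda>n. zs (n + N)) \<longlonglongrightarrow> z" using zs(2) by (rule LIMSEQ_ignore_initial_segment)
      moreover have "closed {x. f x \<le> ereal (r - Q z + \<delta>)}" using lsc unfolding lsc_fun_def by blast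
      ultimately show ?thesis
        using closed_sequentially[of "{x. f x \<le> ereal (r - Q z + \<delta>)}" "\<lambda>n. zs (n + N)" z] by simp
    qed
    have "f z \<le> ereal (r - Q z)"
    proof (cases "f z")
      case (real v)
      have "v \<le> r - Q z + \<delta>" if "\<delta> > 0" for \<delta> using fz[OF that] real by simp
      hence "v \<le> r - Q z" by (rule field_le_epsilon) 
      thus ?thesis using real by simp
    next
      case PInf thus ?thesis using fz[of 1] by simp
    next
      case MInf thus ?thesis using pr by simp
    qed
    thus "z \<in> {x. f x + ereal (Q x) \<le> c}" using real by (cases "f z") auto
  qed
qed

lemma aux3: fixes fp fw q A C g t :: real
  shows "fp + q \<le> (1 - t) * fp + t * fw + Q2 \<Longrightarrow> Q2 = q - t * A / g + t^2 * C / (2 * g) \<Longrightarrow> g > 0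
    \<Longrightarrow> t * (fp - fw + A / g) \<le> t * (t * (C / (2 * g)))"
  by (simp add: field_simps power2_eq_square)

lemma prox:
  fixes f :: "'a::{real_inner,complete_space} \<Rightarrow> ereal" and M :: "'a \<Rightarrow> 'a"
  assumes f: "proper_fun f" "lsc_fun f" "convex_fun f"
    and xb: "\<And>w. ereal (inner (xb - w) b) + f xb \<le> f w" and fxb: "f xb \<noteq> \<infinity>"
    and MP: "M \<in> P_alpha \<alpha>" and \<alpha>: "\<alpha> > 0" and \<gamma>: "\<gamma> > 0"
    and p: "p = (ARG_MIN (\<lambda>z. f z + ereal (1 / (2 * \<gamma>) * (M_norm (inv M) (z - y))\<^sup>2)) z. True)"
  shows "f p \<noteq> \<infinity>" "f p + ereal (inner ((1/\<gamma>) *\<^sub>R inv M (y - p)) (w - p)) \<le> f w"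
proof -
  define W where "W = inv M"
  have Wbl: "bounded_linear W" unfolding W_def by (rule P_inv_bl[OF MP \<alpha>])
  have Wsa: "inner (W u) v = inner u (W v)" for u v unfolding W_def by (rule P_inv_sa[OF MP \<alpha>])
  have Wpos: "inner (W u) u \<ge> 0" for u unfolding W_def by (rule P_inv_pos[OF MP \<alpha>])
  define K where "K = onorm M + 1"
  have K: "K > 0" unfolding K_def using onorm_pos_le[OF P_bl[OF MP \<alpha>]] by simp
  have Wlow: "(norm u)\<^sup>2 \<le> K * inner (W u) u" for u
  proof -
    have "(norm u)\<^sup>2 \<le> onorm M * inner (W u) u" unfolding W_def by (rule P_inv_low[OF MP \<alpha>])
    also have "\<dots> \<le> K * inner (W u) u" unfolding K_def using Wpos[of u] by (simp add: algebra_simps)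
    finally show ?thesis .
  qed
  have fni: "f x \<noteq> -\<infinity>" for x using f(1) unfolding proper_fun_def by blast
  define Q where "Q z = inner (W (z - y)) (z - y) / (2 * \<gamma>)" for z
  define g where "g z = f z + ereal (Q z)" for z
  have g_eq: "(\<lambda>z. f z + ereal (1 / (2 * \<gamma>) * (M_norm (inv M) (z - y))\<^sup>2)) = g"
  proof (rule ext)
    fix z
    have "(M_norm (inv M) (z - y))\<^sup>2 = inner (W (z - y)) (z - y)"
      unfolding W_def by (rule Mnorm_sq[OF P_inv_pos[OF MP \<alpha>]])
    thus "f z + ereal (1 / (2 * \<gamma>) * (M_norm (inv M) (z - y))\<^sup>2) = g z"
      by (simp add: g_def Q_def)
  qed
  have Qcont: "continuous_on UNIV Q" unfolding Q_def
    by (intro continuous_intros bounded_linear.continuous_on[OF Wbl]) (use \<gamma> in auto)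
  have lsc: "closed {x. g x \<le> c}" for c unfolding g_def by (rule lsc_plus_cont[OF f(2) fni Qcont])
  obtain fxr where fxr: "f xb = ereal fxr" using fxb fni[of xb] by (cases "f xb") auto
  define c where "c = 1 / (2 * \<gamma> * K)"
  have c: "c > 0" unfolding c_def using \<gamma> K by simp
  have Qlow: "c * (norm (z - y))\<^sup>2 \<le> Q z" for z
    unfolding Q_def c_def using Wlow[of "z - y"] \<gamma> K by (simp add: field_simps)
  define m where "m = fxr + inner (xb - y) b - (norm b)\<^sup>2 / (4 * c)"
  have bdd: "g z \<ge> ereal m" for z
  proof -
    have "ereal (inner (xb - z) b) + ereal fxr \<le> f z" using xb[of z] fxr by simp
    hence fz: "ereal (fxr + inner (xb - z) b) \<le> f z" by (simp add: add.commute)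
    have "inner (xb - z) b = inner (xb - y) b - inner (z - y) b" by (simp add: inner_diff_left)
    moreover have "inner (z - y) b \<le> norm (z - y) * norm b" by (rule norm_cauchy_schwarz)
    moreover have "0 \<le> (2 * c * norm (z - y) - norm b)\<^sup>2" by simp
    hence "4 * c * (norm (z - y) * norm b) \<le> 4 * c * (c * (norm (z - y))\<^sup>2) + (norm b)\<^sup>2"
      by (simp add: power2_eq_square algebra_simps)
    hence "norm (z - y) * norm b - (norm b)\<^sup>2 / (4 * c) \<le> c * (norm (z - y))\<^sup>2"
      using c by (simp add: field_simps)
    ultimately have "m \<le> fxr + inner (xb - z) b + Q z" unfolding m_def using Qlow[of z] by linarith
    hence "ereal m \<le> ereal (fxr + inner (xb - z) b) + ereal (Q z)" by simp
    also have "\<dots> \<le> f z + ereal (Q z)" using fz by (rule add_right_mono)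
    finally show ?thesis unfolding g_def .
  qed
  have pr: "\<exists>x. g x < \<infinity>" using fxr by (auto simp: g_def intro!: exI[of _ xb])
  have sc: "g ((1/2) *\<^sub>R (a1 + a2)) \<le> ereal ((r1 + r2)/2 - (c/4) * (norm (a1 - a2))\<^sup>2)"
    if "g a1 = ereal r1" "g a2 = ereal r2" for a1 a2 r1 r2
  proof -
    have "f a1 \<noteq> \<infinity>" using that(1) unfolding g_def by (cases "f a1"; cases "f a2") auto
    then obtain s1 where s1: "f a1 = ereal s1" using fni[of a1] by (cases "f a1") auto
    have "f a2 \<noteq> \<infinity>" using that(2) unfolding g_def by (cases "f a1"; cases "f a2") auto
    then obtain s2 where s2: "f a2 = ereal s2" using fni[of a2] by (cases "f a2") auto
    have r1: "r1 = s1 + Q a1" using that(1) s1 unfolding g_def by simp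
    have r2: "r2 = s2 + Q a2" using that(2) s2 unfolding g_def by simp
    have "f ((1 - 1/2) *\<^sub>R a1 + (1/2) *\<^sub>R a2) \<le> ereal ((1 - 1/2) * s1 + (1/2) * s2)"
      by (rule conv_real[OF f(3) s1 s2]) auto
    hence fm: "f ((1/2) *\<^sub>R (a1 + a2)) \<le> ereal ((s1 + s2)/2)" by (simp add: scaleR_add_right add_divide_distrib)
    have e1: "(1/2) *\<^sub>R (a1 + a2) - y = (1/2) *\<^sub>R ((a1 - y) + (a2 - y))"
    proof -
      have "(1/2::real) *\<^sub>R y + (1/2::real) *\<^sub>R y = y" by (simp flip: scaleR_add_left)
      thus ?thesis by (simp add: algebra_simps)
    qed
    have "Q ((1/2) *\<^sub>R (a1 + a2)) = (Q a1 + Q a2)/2 - inner (W (a1 - a2)) (a1 - a2) / (8 * \<gamma>)"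
      unfolding Q_def e1 quad_mid[OF Wbl Wsa] using \<gamma> by (simp add: field_simps)
    also have "\<dots> \<le> (Q a1 + Q a2)/2 - (c/4) * (norm (a1 - a2))\<^sup>2"
    proof -
      have "(c/4) * (norm (a1 - a2))\<^sup>2 \<le> inner (W (a1 - a2)) (a1 - a2) / (8 * \<gamma>)"
        unfolding c_def using Wlow[of "a1 - a2"] \<gamma> K by (simp add: field_simps)
      thus ?thesis by simp
    qed
    finally have qm: "Q ((1/2) *\<^sub>R (a1 + a2)) \<le> (Q a1 + Q a2)/2 - (c/4) * (norm (a1 - a2))\<^sup>2" .
    have "g ((1/2) *\<^sub>R (a1 + a2)) \<le> ereal ((s1 + s2)/2) + ereal ((Q a1 + Q a2)/2 - (c/4) * (norm (a1 - a2))\<^sup>2)"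
      unfolding g_def using fm qm by (intro add_mono) auto
    also have "\<dots> = ereal ((r1 + r2)/2 - (c/4) * (norm (a1 - a2))\<^sup>2)" unfolding r1 r2 by (simp add: field_simps)
    finally show ?thesis .
  qed
  have ex: "\<exists>z. \<forall>x. g z \<le> g x"
  proof (rule min_exists[where c="c/4", OF lsc bdd pr])
    show "0 < c/4" using c by simp
  next
    fix a b ra rb assume "g a = ereal ra" "g b = ereal rb"
    thus "g ((1/2) *\<^sub>R (a + b)) \<le> ereal ((ra + rb)/2 - (c/4) * (norm (a - b))\<^sup>2)" by (rule sc)
  qed
  have pmin: "g p \<le> g x" for x unfolding p g_eq by (rule argmin_is_min[OF ex])
  have "g p < \<infinity>" using pmin[of xb] fxr by (auto simp: g_def)
  thus fp: "f p \<noteq> \<infinity>" unfolding g_def by auto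
  then obtain fp where fpr: "f p = ereal fp" using fni[of p] by (cases "f p") auto
  show "f p + ereal (inner ((1/\<gamma>) *\<^sub>R inv M (y - p)) (w - p)) \<le> f w"
  proof (cases "f w = \<infinity>")
    case True thus ?thesis using fpr by simp
  next
    case False
    then obtain fw where fwr: "f w = ereal fw" using fni[of w] by (cases "f w") auto
    have "fp - fw + inner (W (y - p)) (w - p) / \<gamma> \<le> 0"
    proof (rule le_small)
      fix t :: real assume t: "0 < t" "t \<le> 1"
      have zt: "(1 - t) *\<^sub>R p + t *\<^sub>R w = p + t *\<^sub>R (w - p)" by (simp add: algebra_simps)
      have fzt: "f (p + t *\<^sub>R (w - p)) \<le> ereal ((1 - t) * fp + t * fw)"
        using conv_real[OF f(3) fpr fwr, of t] t zt by simp
      have "g p \<le> g (p + t *\<^sub>R (w - p))" by (rule pmin)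
      also have "\<dots> \<le> ereal ((1 - t) * fp + t * fw) + ereal (Q (p + t *\<^sub>R (w - p)))"
        unfolding g_def using fzt by (rule add_right_mono)
      finally have "fp + Q p \<le> (1 - t) * fp + t * fw + Q (p + t *\<^sub>R (w - p))"
        using fpr unfolding g_def by simp
      moreover have "Q (p + t *\<^sub>R (w - p)) = Q p - t * inner (W (y - p)) (w - p) / \<gamma>
            + t^2 * inner (W (w - p)) (w - p) / (2 * \<gamma>)"
      proof -
        have e: "p + t *\<^sub>R (w - p) - y = (p - y) + t *\<^sub>R (w - p)" by simp
        have m: "inner (W (p - y)) (w - p) = - inner (W (y - p)) (w - p)"
          using bl_minus[OF Wbl, of "y - p"] by simp
        have "inner (W (p + t *\<^sub>R (w - p) - y)) (p + t *\<^sub>R (w - p) - y) =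
            inner (W (p - y)) (p - y) - 2 * t * inner (W (y - p)) (w - p) + t^2 * inner (W (w - p)) (w - p)"
          unfolding e quad_expand[OF Wbl Wsa] m by simp
        thus ?thesis unfolding Q_def using \<gamma> by (simp add: field_simps)
      qed
      ultimately have h: "t * (fp - fw + inner (W (y - p)) (w - p) / \<gamma>) \<le> t * (t * (inner (W (w - p)) (w - p) / (2 * \<gamma>)))"
        using \<gamma> by (intro aux3) auto
      show "fp - fw + inner (W (y - p)) (w - p) / \<gamma> \<le> t * (inner (W (w - p)) (w - p) / (2 * \<gamma>))"
        using mult_left_le_imp_le[OF h] t(1) by blast
    qed
    hence "fp + inner ((1/\<gamma>) *\<^sub>R W (y - p)) (w - p) \<le> fw" by simp
    thus ?thesis using fpr fwr unfolding W_def by simp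
  qed
qed

lemma fejer_arith:
  fixes Np Nx Ne Nh E g \<beta> \<mu> \<epsilon> :: real
  assumes "Np \<le> Nx - Ne + Nh" "Nh \<le> g^2 * \<mu> * \<beta>^2 * E" "E \<le> \<mu> * Ne"
    "g * \<beta> * \<mu> \<le> 1 - \<epsilon>" "0 \<le> g * \<beta> * \<mu>" "0 < \<epsilon>" "\<epsilon> < 1" "\<mu> > 0" "E \<ge> 0"
  shows "Np \<le> Nx - (\<epsilon> / \<mu>) * E"
proof -
  have "(g * \<beta> * \<mu>)^2 \<le> (1 - \<epsilon>)^2" using assms(4,5) by (rule power_mono)
  also have "(1 - \<epsilon>)^2 = (1 - \<epsilon>) * (1 - \<epsilon>)" by (rule power2_eq_square)
  also have "\<dots> \<le> 1 * (1 - \<epsilon>)" by (rule mult_right_mono) (use assms(6,7) in auto)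
  finally have s: "(g * \<beta> * \<mu>)^2 \<le> 1 - \<epsilon>" by simp
  have "Nh * \<mu> \<le> (g^2 * \<mu> * \<beta>^2 * E) * \<mu>" by (rule mult_right_mono[OF assms(2)]) (use assms(8) in simp)
  also have "\<dots> = (g * \<beta> * \<mu>)^2 * E" by (simp add: power2_eq_square)
  also have "\<dots> \<le> (1 - \<epsilon>) * E" using s assms(9) by (rule mult_right_mono)
  finally have h1: "Nh * \<mu> \<le> (1 - \<epsilon>) * E" .
  have "Np * \<mu> \<le> (Nx - Ne + Nh) * \<mu>" by (rule mult_right_mono[OF assms(1)]) (use assms(8) in simp)
  also have "\<dots> = Nx * \<mu> - Ne * \<mu> + Nh * \<mu>" by (simp add: ring_distribs)
  finally have h2: "Np * \<mu> \<le> Nx * \<mu> - Ne * \<mu> + Nh * \<mu>" .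
  have h3: "E \<le> Ne * \<mu>" using assms(3) by (simp add: mult.commute)
  have h4: "(1 - \<epsilon>) * E = E - \<epsilon> * E" by (simp add: ring_distribs)
  have "Np * \<mu> \<le> Nx * \<mu> - \<epsilon> * E" using h1 h2 h3 h4 by linarith
  also have "Nx * \<mu> - \<epsilon> * E = (Nx - (\<epsilon> / \<mu>) * E) * \<mu>" using assms(8) by (simp add: field_simps)
  finally show ?thesis using assms(8) by (rule mult_right_le_imp_le)
qed

lemma solfin:
  assumes "proper_fun f" "vi_solution f B z"
  shows "f z \<noteq> \<infinity>"
proof
  assume inf: "f z = \<infinity>"
  obtain w where "f w \<noteq> \<infinity>" using assms(1) unfolding proper_fun_def by blast
  moreover have "ereal (inner (z - w) (B z)) + f z \<le> f w" using assms(2) unfolding vi_solution_def by blast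
  ultimately show False using inf by simp
qed

lemma weak_tail:
  assumes "weakly_converges u z"
  shows "weakly_converges (\<lambda>k. u (k + N)) z"
  using assms unfolding weakly_converges_def
  by (intro allI) (rule LIMSEQ_ignore_initial_segment, blast)

lemma weak_lsc:
  fixes f :: "'a::{real_inner,complete_space} \<Rightarrow> ereal"
  assumes f: "proper_fun f" "lsc_fun f" "convex_fun f"
    and wz: "weakly_converges u z" and s: "s \<longlonglongrightarrow> R" and le: "\<And>k. f (u k) \<le> ereal (s k)"
  shows "f z \<le> ereal R"
proof -
  have fni: "f v \<noteq> -\<infinity>" for v using f(1) unfolding proper_fun_def by blast
  have d: "f z \<le> ereal (R + \<delta>)" if \<delta>: "\<delta> > 0" for \<delta>
  proof -
    obtain N where N: "\<And>k. k \<ge> N \<Longrightarrow> \<bar>s k - R\<bar> < \<delta>"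
      using s \<delta> unfolding LIMSEQ_iff by (auto simp: real_norm_def)
    define C where "C = {v. f v \<le> ereal (R + \<delta>)}"
    have "closed C" unfolding C_def using f(2) unfolding lsc_fun_def by blast
    moreover have "convex C" unfolding C_def by (rule sublevel_convex[OF f(3) f(1)])
    moreover have "u (k + N) \<in> C" for k
    proof -
      have "f (u (k + N)) \<le> ereal (s (k + N))" by (rule le)
      also have "s (k + N) \<le> R + \<delta>" using N[of "k + N"] by simp
      finally show ?thesis unfolding C_def by simp
    qed
    ultimately have "z \<in> C" by (rule weakly_closed[OF _ _ _ weak_tail[OF wz, of N]])
    thus ?thesis unfolding C_def by simp
  qed
  show ?thesis
  proof (cases "f z")
    case (real v)
    have "v \<le> R + \<delta>" if "\<delta> > 0" for \<delta> using d[OF that] real by simp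
    hence "v \<le> R" by (rule field_le_epsilon)
    thus ?thesis using real by simp
  next
    case PInf thus ?thesis using d[of 1] by simp
  next
    case MInf thus ?thesis using fni[of z] by simp
  qed
qed

lemma minty_vi:
  fixes f :: "'a::{real_inner,complete_space} \<Rightarrow> ereal"
  assumes f: "proper_fun f" "convex_fun f"
    and Blip: "\<And>u v. norm (B u - B v) \<le> \<beta> * norm (u - v)"
    and minty: "\<And>w fw. f w = ereal fw \<Longrightarrow> f z \<le> ereal (fw + inner (B w) (w - z))"
    and fz: "f z = ereal fzr"
  shows "vi_solution f B z"
  unfolding vi_solution_def
proof
  fix w
  have fni: "f v \<noteq> -\<infinity>" for v using f(1) unfolding proper_fun_def by blast
  show "ereal (inner (z - w) (B z)) + f z \<le> f w"
  proof (cases "f w = \<infinity>")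
    case True thus ?thesis using fz by simp
  next
    case False
    then obtain fw where fw: "f w = ereal fw" using fni[of w] by (cases "f w") auto
    define wt where "wt k = z + (1 / (real k + 1)) *\<^sub>R (w - z)" for k
    have ineq: "fzr - fw \<le> inner (B (wt k)) (w - z)" for k
    proof -
      define t where "t = 1 / (real k + 1)"
      have t: "0 < t" "t \<le> 1" unfolding t_def by (auto simp: field_simps)
      have "wt k = (1 - t) *\<^sub>R z + t *\<^sub>R w" unfolding wt_def t_def by (simp add: algebra_simps)
      hence fwt: "f (wt k) \<le> ereal ((1 - t) * fzr + t * fw)"
        using conv_real[OF f(2) fz fw, of t] t by simp
      hence "f (wt k) \<noteq> \<infinity>" by auto
      then obtain fwt where fwtr: "f (wt k) = ereal fwt" using fni[of "wt k"] by (cases "f (wt k)") auto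
      have "fzr \<le> fwt + inner (B (wt k)) (wt k - z)" using minty[OF fwtr] fz by simp
      moreover have "wt k - z = t *\<^sub>R (w - z)" unfolding wt_def t_def by simp
      moreover have "fwt \<le> (1 - t) * fzr + t * fw" using fwt fwtr by simp
      ultimately have "fzr \<le> (1 - t) * fzr + t * fw + t * inner (B (wt k)) (w - z)" by simp
      hence "t * (fzr - fw) \<le> t * inner (B (wt k)) (w - z)" by (simp add: algebra_simps)
      thus ?thesis using t by simp
    qed
    have inv0: "(\<lambda>k. 1 / (real k + 1)) \<longlonglongrightarrow> 0"
      using LIMSEQ_inverse_real_of_nat by (simp add: inverse_eq_divide add.commute)
    have "(\<lambda>k. wt k) \<longlonglongrightarrow> z + 0 *\<^sub>R (w - z)"
      unfolding wt_def by (intro tendsto_add tendsto_const tendsto_scaleR inv0)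
    hence wtl: "wt \<longlonglongrightarrow> z" by simp
    have "(\<lambda>k. B (wt k)) \<longlonglongrightarrow> B z"
    proof -
      have "(\<lambda>k. B (wt k) - B z) \<longlonglongrightarrow> 0"
      proof (rule Lim_null_comparison)
        show "\<forall>\<^sub>F k in sequentially. norm (B (wt k) - B z) \<le> \<beta> * norm (wt k - z)" using Blip by simp
        have "(\<lambda>k. wt k - z) \<longlonglongrightarrow> 0" using wtl by (simp add: LIM_zero)
        hence "(\<lambda>k. norm (wt k - z)) \<longlonglongrightarrow> 0" by (simp add: tendsto_norm_zero)
        thus "(\<lambda>k. \<beta> * norm (wt k - z)) \<longlonglongrightarrow> 0" by (simp add: tendsto_mult_right_zero)
      qed
      thus ?thesis by (simp add: LIM_zero_iff)
    qed
    hence "(\<lambda>k. inner (B (wt k)) (w - z)) \<longlonglongrightarrow> inner (B z) (w - z)" by (intro tendsto_intros)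
    hence "fzr - fw \<le> inner (B z) (w - z)" using ineq by (intro LIMSEQ_le_const) auto
    hence "inner (z - w) (B z) + fzr \<le> fw" by (simp add: inner_diff_left inner_diff_right inner_commute)
    thus ?thesis using fz fw by simp
  qed
qed

lemma aux4: fixes e D a :: real shows "0 \<le> e * D \<Longrightarrow> (1 + e) * (a - D) \<le> (1 + e) * a - D"
  by (simp add: algebra_simps)

theorem mainTheorem2:
  fixes f :: "'a::{real_inner, complete_space} \<Rightarrow> ereal"
    and B :: "'a \<Rightarrow> 'a"
    and U :: "nat \<Rightarrow> 'a \<Rightarrow> 'a"
    and \<eta> \<gamma> :: "nat \<Rightarrow> real"
    and \<alpha> \<beta> \<mu> \<epsilon> :: real
    and x y p q :: "nat \<Rightarrow> 'a"
    and x0 :: 'a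
  assumes f: "proper_fun f" "lsc_fun f" "convex_fun f"
    and \<alpha>: "\<alpha> > 0" and \<beta>: "\<beta> > 0"
    and B: "monotone_op B" "lipschitz_on \<beta> UNIV B"
    and \<eta>: "\<And>n. \<eta> n \<ge> 0" "summable \<eta>"
    and U: "\<And>n. U n \<in> P_alpha \<alpha>"
    and Ubdd: "bdd_above (range (\<lambda>n. onorm (U n)))"
    and \<mu>: "\<mu> = (SUP n. onorm (U n))"
    and Umono: "\<And>n. loewner_ge (\<lambda>z. (1 + \<eta> n) *\<^sub>R U (Suc n) z) (U n)"
    and \<epsilon>: "0 < \<epsilon>" "\<epsilon> < min 1 (1 / (\<mu> * \<beta> + 1))"
    and \<gamma>: "\<And>n. \<gamma> n \<in> {\<epsilon> .. (1 - \<epsilon>) / (\<beta> * \<mu>)}"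
    and sol: "\<exists>xb. vi_solution f B xb"
    and x0: "x 0 = x0"
    and yn: "\<And>n. y n = x n - \<gamma> n *\<^sub>R U n (B (x n))"
    and pn: "\<And>n. p n = (ARG_MIN (\<lambda>z. f z + ereal (1 / (2 * \<gamma> n) * (M_norm (inv (U n)) (z - y n))\<^sup>2)) z. True)"
    and qn: "\<And>n. q n = p n - \<gamma> n *\<^sub>R U n (B (p n))"
    and xn: "\<And>n. x (Suc n) = x n - y n + q n"
  shows "\<exists>xb. vi_solution f B xb \<and> weakly_converges x xb"
proof -
  define W where "W n = inv (U n)" for n
  have Ubl: "bounded_linear (U n)" for n by (rule P_bl[OF U \<alpha>])
  have Usa: "inner (U n u) v = inner u (U n v)" for n u v by (rule P_sa[OF U \<alpha>])
  have Upos: "inner (U n u) u \<ge> 0" for n u by (rule P_pos[OF U \<alpha>])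
  have Wbl: "bounded_linear (W n)" for n unfolding W_def by (rule P_inv_bl[OF U \<alpha>])
  have Wsa: "inner (W n u) v = inner u (W n v)" for n u v unfolding W_def by (rule P_inv_sa[OF U \<alpha>])
  have Wpos: "inner (W n u) u \<ge> 0" for n u unfolding W_def by (rule P_inv_pos[OF U \<alpha>])
  have UW: "U n (W n v) = v" for n v unfolding W_def by (rule P_inv1[OF U \<alpha>])
  have WU: "W n (U n v) = v" for n v unfolding W_def by (rule P_inv2[OF U \<alpha>])
  have Wnorm: "norm (W n v) \<le> (1/\<alpha>) * norm v" for n v unfolding W_def by (rule P_inv_norm[OF U \<alpha>])
  have onle: "onorm (U n) \<le> \<mu>" for n unfolding \<mu> by (rule cSUP_upper) (use Ubdd in auto)
  have Wlow: "(norm v)\<^sup>2 \<le> \<mu> * inner (W n v) v" for n v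
  proof -
    have "(norm v)\<^sup>2 \<le> onorm (U n) * inner (W n v) v" unfolding W_def by (rule P_inv_low[OF U \<alpha>])
    also have "\<dots> \<le> \<mu> * inner (W n v) v" by (rule mult_right_mono[OF onle Wpos])
    finally show ?thesis .
  qed
  have Uup: "inner (U n v) v \<le> \<mu> * (norm v)\<^sup>2" for n v
  proof -
    have "inner (U n v) v \<le> norm (U n v) * norm v" by (rule norm_cauchy_schwarz)
    also have "\<dots> \<le> (onorm (U n) * norm v) * norm v" by (rule mult_right_mono[OF onorm[OF Ubl]]) simp
    also have "\<dots> \<le> (\<mu> * norm v) * norm v" by (intro mult_right_mono onle) auto
    finally show ?thesis by (simp add: power2_eq_square mult.assoc)
  qed
  have \<epsilon>1: "\<epsilon> < 1" using \<epsilon>(2) by simp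
  have \<beta>\<mu>: "\<beta> * \<mu> > 0"
  proof (rule ccontr)
    assume "\<not> \<beta> * \<mu> > 0"
    hence "(1 - \<epsilon>) / (\<beta> * \<mu>) \<le> 0" using \<epsilon>1 by (simp add: divide_nonneg_nonpos)
    moreover have "\<epsilon> \<le> (1 - \<epsilon>) / (\<beta> * \<mu>)" using \<gamma>[of 0] by simp
    ultimately show False using \<epsilon>(1) by simp
  qed
  have \<mu>pos: "\<mu> > 0" using \<beta>\<mu> \<beta> by (simp add: zero_less_mult_iff)
  have \<gamma>pos: "\<gamma> n > 0" for n using \<gamma>[of n] \<epsilon>(1) by simp
  have \<gamma>ge: "\<gamma> n \<ge> \<epsilon>" for n using \<gamma>[of n] by simp
  have \<gamma>\<beta>\<mu>: "\<gamma> n * \<beta> * \<mu> \<le> 1 - \<epsilon>" for n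
  proof -
    have "\<gamma> n \<le> (1 - \<epsilon>) / (\<beta> * \<mu>)" using \<gamma>[of n] by simp
    thus ?thesis using \<beta>\<mu> by (simp add: field_simps)
  qed
  have Blip: "norm (B u - B v) \<le> \<beta> * norm (u - v)" for u v
    using lipschitz_onD[OF B(2), of u v] by (simp add: dist_norm)
  have Bmon: "inner (u - v) (B u - B v) \<ge> 0" for u v using B(1) unfolding monotone_op_def by blast
  have fni: "f v \<noteq> -\<infinity>" for v using f(1) unfolding proper_fun_def by blast
  obtain xb where xb: "vi_solution f B xb" using sol by blast
  have fxb: "f xb \<noteq> \<infinity>" by (rule solfin[OF f(1) xb])
  have xbi: "ereal (inner (xb - w) (B xb)) + f xb \<le> f w" for w using xb unfolding vi_solution_def by blast
  have pfin: "f (p n) \<noteq> \<infinity>" for n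
    by (rule prox(1)[OF f xbi fxb U \<alpha> \<gamma>pos pn])
  have pchar: "f (p n) + ereal (inner ((1/\<gamma> n) *\<^sub>R W n (y n - p n)) (w - p n)) \<le> f w" for n w
    unfolding W_def by (rule prox(2)[OF f xbi fxb U \<alpha> \<gamma>pos pn])
  have xsuc: "x (Suc n) = p n + \<gamma> n *\<^sub>R U n (B (x n) - B (p n))" for n
    using xn[of n] yn[of n] qn[of n] by (simp add: bl_diff[OF Ubl] algebra_simps)
  have Wyp: "W n (y n - p n) = W n (x n - p n) - \<gamma> n *\<^sub>R B (x n)" for n
  proof -
    have "y n - p n = (x n - p n) - \<gamma> n *\<^sub>R U n (B (x n))" using yn[of n] by simp
    thus ?thesis by (simp add: bl_diff[OF Wbl] bl_scale[OF Wbl] WU)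
  qed
  define N where "N n v = inner (W n v) v" for n v
  have fej: "N n (x (Suc n) - z) \<le> N n (x n - z) - (\<epsilon> / \<mu>) * (norm (x n - p n))\<^sup>2"
    if zs: "vi_solution f B z" for n z
  proof -
    define e where "e = x n - p n"
    define d where "d = B (x n) - B (p n)"
    define h where "h = \<gamma> n *\<^sub>R U n d"
    define g where "g = \<gamma> n"
    have g: "g > 0" unfolding g_def by (rule \<gamma>pos)
    have fz: "f z \<noteq> \<infinity>" by (rule solfin[OF f(1) zs])
    obtain fzr where fzr: "f z = ereal fzr" using fz fni[of z] by (cases "f z") auto
    obtain fpr where fpr: "f (p n) = ereal fpr" using pfin[of n] fni[of "p n"] by (cases "f (p n)") auto
    have i1: "fpr + inner ((1/g) *\<^sub>R W n (y n - p n)) (z - p n) \<le> fzr"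
      using pchar[of n z] fzr fpr unfolding g_def by simp
    have i2: "inner (z - p n) (B z) + fzr \<le> fpr"
      using zs fzr fpr unfolding vi_solution_def by (metis plus_ereal.simps(1) ereal_less_eq(3))
    have i3: "inner (p n - z) (B (p n) - B z) \<ge> 0" by (rule Bmon)
    have Wh: "W n h = g *\<^sub>R d" unfolding h_def g_def by (simp add: bl_scale[OF Wbl] WU)
    have key: "inner (W n (p n - z)) e \<ge> g * inner (p n - z) d"
    proof -
      have a: "inner ((1/g) *\<^sub>R W n (y n - p n)) (z - p n) = (1/g) * inner (W n e) (z - p n) - inner (B (x n)) (z - p n)"
        unfolding Wyp e_def g_def using g[unfolded g_def] by (simp add: inner_diff_left diff_divide_distrib)
      have b: "inner (z - p n) (B z) \<ge> inner (z - p n) (B (p n))"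
        using i3 by (simp add: inner_diff_left inner_diff_right inner_commute algebra_simps)
      have "(1/g) * inner (W n e) (z - p n) \<le> inner (B (x n)) (z - p n) - inner (z - p n) (B (p n))"
        using i1 i2 a b by linarith
      hence "(1/g) * inner (W n e) (z - p n) \<le> inner (z - p n) d"
        unfolding d_def by (simp add: inner_diff_right inner_commute)
      hence "inner (W n e) (z - p n) \<le> g * inner (z - p n) d" using g by (simp add: field_simps)
      moreover have "inner (W n e) (z - p n) = - inner (W n (p n - z)) e"
      proof -
        have "inner (W n e) (z - p n) = inner e (W n (z - p n))" by (rule Wsa)
        also have "W n (z - p n) = - W n (p n - z)" using bl_minus[OF Wbl, of n "p n - z"] by simp
        finally show ?thesis by (simp add: inner_commute)
      qed
      moreover have "inner (z - p n) d = - inner (p n - z) d" by (simp add: inner_diff_left)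
      ultimately show ?thesis by simp
    qed
    have xe: "x n - z = (p n - z) + 1 *\<^sub>R e" unfolding e_def by simp
    have xpe: "x (Suc n) - z = (p n - z) + 1 *\<^sub>R h" unfolding h_def d_def xsuc by simp
    have Nx: "N n (x n - z) = N n (p n - z) + 2 * inner (W n (p n - z)) e + N n e"
      unfolding N_def xe quad_expand[OF Wbl Wsa] by simp
    have Np: "N n (x (Suc n) - z) = N n (p n - z) + 2 * inner (W n (p n - z)) h + N n h"
      unfolding N_def xpe quad_expand[OF Wbl Wsa] by simp
    have Wph: "inner (W n (p n - z)) h = g * inner (p n - z) d"
      using Wsa[of n "p n - z" h] Wh by simp
    have s1: "N n (x (Suc n) - z) \<le> N n (x n - z) - N n e + N n h"
      using Nx Np Wph key by linarith
    have s2: "N n h \<le> g^2 * \<mu> * \<beta>^2 * (norm e)\<^sup>2"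
    proof -
      have "N n h = inner (g *\<^sub>R d) (g *\<^sub>R U n d)" unfolding N_def Wh by (simp add: h_def g_def)
      also have "\<dots> = g^2 * inner (U n d) d" by (simp add: power2_eq_square inner_commute)
      also have "\<dots> \<le> g^2 * (\<mu> * (norm d)\<^sup>2)" by (intro mult_left_mono Uup) simp
      also have "(norm d)\<^sup>2 \<le> (\<beta> * norm e)\<^sup>2"
        unfolding d_def e_def by (intro power_mono Blip) simp
      hence "g^2 * (\<mu> * (norm d)\<^sup>2) \<le> g^2 * (\<mu> * (\<beta> * norm e)\<^sup>2)"
        using \<mu>pos by (intro mult_left_mono) auto
      finally show ?thesis by (simp add: power_mult_distrib algebra_simps)
    qed
    have s3: "(norm e)\<^sup>2 \<le> \<mu> * N n e" unfolding N_def by (rule Wlow)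
    have "N n (x (Suc n) - z) \<le> N n (x n - z) - (\<epsilon> / \<mu>) * (norm e)\<^sup>2"
      by (rule fejer_arith[OF s1 s2 s3]) (use \<gamma>\<beta>\<mu>[of n] g \<beta> \<mu>pos \<epsilon>(1) \<epsilon>1 in \<open>auto simp: g_def\<close>)
    thus ?thesis unfolding e_def .
  qed
  have Wmono: "N (Suc n) v \<le> (1 + \<eta> n) * N n v" for n v
  proof -
    have e: "1 + \<eta> n > 0" using \<eta>(1)[of n] by simp
    have "inner ((1/(1 + \<eta> n)) *\<^sub>R W (Suc n) v) v \<le> inner (W n v) v"
    proof (rule inv_order[where A="\<lambda>z. (1 + \<eta> n) *\<^sub>R U (Suc n) z" and B="U n"
          and WA="\<lambda>z. (1/(1 + \<eta> n)) *\<^sub>R W (Suc n) z" and WB="W n", OF Ubl Usa Upos])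
      show "inner ((1 + \<eta> n) *\<^sub>R U (Suc n) u) u \<ge> inner (U n u) u" for u
        using Umono[of n] unfolding loewner_ge_def by blast
      show "(1 + \<eta> n) *\<^sub>R U (Suc n) ((1/(1 + \<eta> n)) *\<^sub>R W (Suc n) z) = z" for z
        using e by (simp add: bl_scale[OF Ubl] UW)
      show "U n (W n z) = z" for z by (rule UW)
      show "inner ((1/(1 + \<eta> n)) *\<^sub>R W (Suc n) v) v \<ge> 0" using e Wpos[of "Suc n" v] by simp
    qed
    hence "(1/(1 + \<eta> n)) * N (Suc n) v \<le> N n v" unfolding N_def by simp
    thus ?thesis using e by (simp add: field_simps)
  qed
  have cs: "\<epsilon> / \<mu> > 0" using \<epsilon>(1) \<mu>pos by simp
  have Npos: "N n v \<ge> 0" for n v unfolding N_def by (rule Wpos)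
  have rec: "N (Suc n) (x (Suc n) - z) \<le> (1 + \<eta> n) * N n (x n - z) - (\<epsilon> / \<mu>) * (norm (x n - p n))\<^sup>2"
    if zs: "vi_solution f B z" for n z
  proof -
    have "N (Suc n) (x (Suc n) - z) \<le> (1 + \<eta> n) * N n (x (Suc n) - z)" by (rule Wmono)
    also have "\<dots> \<le> (1 + \<eta> n) * (N n (x n - z) - (\<epsilon> / \<mu>) * (norm (x n - p n))\<^sup>2)"
      using fej[OF zs, of n] \<eta>(1)[of n] by (intro mult_left_mono) auto
    also have "\<dots> \<le> (1 + \<eta> n) * N n (x n - z) - (\<epsilon> / \<mu>) * (norm (x n - p n))\<^sup>2"
    proof -
      have "0 \<le> \<eta> n * ((\<epsilon> / \<mu>) * (norm (x n - p n))\<^sup>2)" using \<eta>(1)[of n] cs by (intro mult_nonneg_nonneg) auto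
      thus ?thesis by (rule aux4)
    qed
    finally show ?thesis .
  qed
  have conv: "convergent (\<lambda>n. N n (x n - z))" if zs: "vi_solution f B z" for z
    by (rule qfejer(1)[OF \<eta>(1) \<eta>(2) cs Npos _ rec[OF zs]]) simp
  have dsum: "summable (\<lambda>n. (norm (x n - p n))\<^sup>2)"
    by (rule qfejer(2)[OF \<eta>(1) \<eta>(2) cs Npos _ rec[OF xb]]) simp
  have dlim: "(\<lambda>n. norm (x n - p n)) \<longlonglongrightarrow> 0"
  proof -
    have "(\<lambda>n. (norm (x n - p n))\<^sup>2) \<longlonglongrightarrow> 0" by (rule summable_LIMSEQ_zero[OF dsum])
    hence "(\<lambda>n. sqrt ((norm (x n - p n))\<^sup>2)) \<longlonglongrightarrow> sqrt 0" by (rule tendsto_real_sqrt)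
    thus ?thesis by simp
  qed
  obtain Mx where Mx: "\<And>n. norm (x n) \<le> Mx"
  proof -
    have "Bseq (\<lambda>n. N n (x n - xb))" using conv[OF xb] by (rule convergent_imp_Bseq)
    then obtain K where K: "K > 0" "\<And>n. norm (N n (x n - xb)) \<le> K" by (auto elim: BseqE)
    have "norm (x n) \<le> norm xb + sqrt (\<mu> * K)" for n
    proof -
      have "(norm (x n - xb))\<^sup>2 \<le> \<mu> * N n (x n - xb)" unfolding N_def by (rule Wlow)
      also have "\<dots> \<le> \<mu> * K" using K(2)[of n] \<mu>pos by (intro mult_left_mono) auto
      finally have "norm (x n - xb) \<le> sqrt (\<mu> * K)" by (rule real_le_rsqrt)
      moreover have "norm (x n) \<le> norm xb + norm (x n - xb)" by (metis norm_triangle_sub add.commute)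
      ultimately show ?thesis by simp
    qed
    thus ?thesis using that by blast
  qed
  obtain Mp where Mp: "\<And>n. norm (p n) \<le> Mp"
  proof -
    have "Bseq (\<lambda>n. norm (x n - p n))" using dlim by (intro convergent_imp_Bseq) (auto simp: convergent_def)
    then obtain K where K: "\<And>n. norm (norm (x n - p n)) \<le> K" unfolding Bseq_def by auto
    have "norm (p n) \<le> Mx + K" for n
    proof -
      have "norm (p n) \<le> norm (x n) + norm (x n - p n)" by (metis norm_triangle_sub norm_minus_commute add.commute)
      thus ?thesis using Mx[of n] K[of n] by simp
    qed
    thus ?thesis using that by blast
  qed
  have Wconv: "convergent (\<lambda>n. W n v)" for v
    by (rule metric_conv[OF \<eta>(1) \<eta>(2) Wbl Wsa Wpos Wnorm]) (use Wmono in \<open>simp add: N_def\<close>)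
  obtain fxr where fxr: "f xb = ereal fxr" using fxb fni[of xb] by (cases "f xb") auto
  have cluster: "vi_solution f B z" if r: "strict_mono r" and wz: "weakly_converges (x \<circ> r) z" for r z
  proof -
    have dr: "(\<lambda>k. norm (x (r k) - p (r k))) \<longlonglongrightarrow> 0"
      using LIMSEQ_subseq_LIMSEQ[OF dlim r] by (simp add: o_def)
    have wp: "weakly_converges (p \<circ> r) z"
      unfolding weakly_converges_def
    proof
      fix h
      have a: "(\<lambda>k. inner (x (r k)) h) \<longlonglongrightarrow> inner z h" using wz unfolding weakly_converges_def by (simp add: o_def)
      have b: "(\<lambda>k. inner (x (r k) - p (r k)) h) \<longlonglongrightarrow> 0"
      proof (rule Lim_null_comparison)
        show "\<forall>\<^sub>F k in sequentially. norm (inner (x (r k) - p (r k)) h) \<le> norm (x (r k) - p (r k)) * norm h"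
          by (simp add: Cauchy_Schwarz_ineq2)
        show "(\<lambda>k. norm (x (r k) - p (r k)) * norm h) \<longlonglongrightarrow> 0" by (rule tendsto_mult_left_zero[OF dr])
      qed
      have "(\<lambda>k. inner (x (r k)) h - inner (x (r k) - p (r k)) h) \<longlonglongrightarrow> inner z h - 0"
        by (intro tendsto_diff a b)
      thus "(\<lambda>k. inner ((p \<circ> r) k) h) \<longlonglongrightarrow> inner z h" by (simp add: inner_diff_left o_def)
    qed
    define gv where "gv n = (1/\<gamma> n) *\<^sub>R W n (x n - p n) - B (x n) + B (p n)" for n
    have gnorm: "norm (gv n) \<le> (1/(\<epsilon>*\<alpha>) + \<beta>) * norm (x n - p n)" for n
    proof -
      have "norm ((1/\<gamma> n) *\<^sub>R W n (x n - p n)) = (1/\<gamma> n) * norm (W n (x n - p n))"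
        using \<gamma>pos[of n] by simp
      also have "\<dots> \<le> (1/\<gamma> n) * ((1/\<alpha>) * norm (x n - p n))"
        using \<gamma>pos[of n] by (intro mult_left_mono Wnorm) auto
      also have "\<dots> \<le> (1/\<epsilon>) * ((1/\<alpha>) * norm (x n - p n))"
        using \<gamma>pos[of n] \<gamma>ge[of n] \<epsilon>(1) \<alpha> by (intro mult_right_mono) (auto simp: frac_le)
      finally have n1: "norm ((1/\<gamma> n) *\<^sub>R W n (x n - p n)) \<le> (1/(\<epsilon>*\<alpha>)) * norm (x n - p n)" by simp
      have n2: "norm (B (p n) - B (x n)) \<le> \<beta> * norm (x n - p n)"
        using Blip[of "p n" "x n"] by (simp add: norm_minus_commute)
      have "gv n = (1/\<gamma> n) *\<^sub>R W n (x n - p n) + (B (p n) - B (x n))" unfolding gv_def by simp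
      hence "norm (gv n) \<le> norm ((1/\<gamma> n) *\<^sub>R W n (x n - p n)) + norm (B (p n) - B (x n))"
        using norm_triangle_ineq by metis
      thus ?thesis using n1 n2 by (simp add: algebra_simps)
    qed
    have glim: "(\<lambda>k. norm (gv (r k))) \<longlonglongrightarrow> 0"
    proof (rule Lim_null_comparison)
      show "\<forall>\<^sub>F k in sequentially. norm (norm (gv (r k))) \<le> (1/(\<epsilon>*\<alpha>) + \<beta>) * norm (x (r k) - p (r k))"
        using gnorm by simp
      show "(\<lambda>k. (1/(\<epsilon>*\<alpha>) + \<beta>) * norm (x (r k) - p (r k))) \<longlonglongrightarrow> 0"
        by (rule tendsto_mult_right_zero[OF dr])
    qed
    have minty: "f z \<le> ereal (fw + inner (B w) (w - z))" if fw: "f w = ereal fw" for w fw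
    proof -
      define sq where "sq k = fw - inner (gv (r k)) (w - p (r k)) + inner (B w) (w - p (r k))" for k
      have t1: "(\<lambda>k. inner (gv (r k)) (w - p (r k))) \<longlonglongrightarrow> 0"
      proof (rule Lim_null_comparison)
        show "\<forall>\<^sub>F k in sequentially. norm (inner (gv (r k)) (w - p (r k))) \<le> norm (gv (r k)) * (norm w + Mp)"
        proof (rule always_eventually, rule allI)
          fix k
          have "norm (inner (gv (r k)) (w - p (r k))) \<le> norm (gv (r k)) * norm (w - p (r k))"
            by (simp add: Cauchy_Schwarz_ineq2)
          also have "\<dots> \<le> norm (gv (r k)) * (norm w + Mp)"
          proof (rule mult_left_mono)
            have "norm (w - p (r k)) \<le> norm w + norm (p (r k))" by (rule norm_triangle_ineq4)
            thus "norm (w - p (r k)) \<le> norm w + Mp" using Mp[of "r k"] by simp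
          qed simp
          finally show "norm (inner (gv (r k)) (w - p (r k))) \<le> norm (gv (r k)) * (norm w + Mp)" .
        qed
        show "(\<lambda>k. norm (gv (r k)) * (norm w + Mp)) \<longlonglongrightarrow> 0" by (rule tendsto_mult_left_zero[OF glim])
      qed
      have t2: "(\<lambda>k. inner (B w) (w - p (r k))) \<longlonglongrightarrow> inner (B w) (w - z)"
      proof -
        have "(\<lambda>k. inner (p (r k)) (B w)) \<longlonglongrightarrow> inner z (B w)" using wp unfolding weakly_converges_def by (simp add: o_def)
        hence "(\<lambda>k. inner (B w) w - inner (p (r k)) (B w)) \<longlonglongrightarrow> inner (B w) w - inner z (B w)"
          by (intro tendsto_diff tendsto_const)
        thus ?thesis by (simp add: inner_diff_right inner_commute)
      qed
      have sl: "sq \<longlonglongrightarrow> fw - 0 + inner (B w) (w - z)" unfolding sq_def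
        by (intro tendsto_add tendsto_diff tendsto_const t1 t2)
      have le: "f ((p \<circ> r) k) \<le> ereal (sq k)" for k
      proof -
        define n where "n = r k"
        obtain fpr where fpr: "f (p n) = ereal fpr" using pfin[of n] fni[of "p n"] by (cases "f (p n)") auto
        have "f (p n) + ereal (inner ((1/\<gamma> n) *\<^sub>R W n (y n - p n)) (w - p n)) \<le> f w" by (rule pchar)
        hence i1: "fpr + inner ((1/\<gamma> n) *\<^sub>R W n (y n - p n)) (w - p n) \<le> fw" using fpr fw by simp
        have "(1/\<gamma> n) *\<^sub>R W n (y n - p n) = gv n - B (p n)"
          unfolding Wyp gv_def using \<gamma>pos[of n] by (simp add: algebra_simps)
        hence i2: "fpr + inner (gv n) (w - p n) - inner (B (p n)) (w - p n) \<le> fw"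
          using i1 by (simp add: inner_diff_left)
        have "inner (w - p n) (B w - B (p n)) \<ge> 0" by (rule Bmon)
        hence i3: "inner (B (p n)) (w - p n) \<le> inner (B w) (w - p n)"
          by (simp add: inner_diff_right inner_commute)
        have "fpr \<le> sq k" unfolding sq_def n_def[symmetric] using i2 i3 by linarith
        thus ?thesis using fpr unfolding n_def by simp
      qed
      show ?thesis using weak_lsc[OF f wp sl le] by simp
    qed
    have "f z \<le> ereal (fxr + inner (B xb) (xb - z))" by (rule minty[OF fxr])
    hence "f z \<noteq> \<infinity>" by auto
    then obtain fzr where fzr: "f z = ereal fzr" using fni[of z] by (cases "f z") auto
    show ?thesis by (rule minty_vi[OF f(1) f(3) Blip minty fzr])
  qed
  have Nexp: "N n (a - b) = N n a - 2 * inner (W n a) b + N n b" for n a b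
  proof -
    have "N n (a + (-1) *\<^sub>R b) = N n a + 2 * (-1) * inner (W n a) b + (-1)^2 * N n b"
      unfolding N_def by (rule quad_expand[OF Wbl Wsa])
    thus ?thesis by simp
  qed
  have uniq: "z1 = z2" if r1: "strict_mono r1" and w1: "weakly_converges (x \<circ> r1) z1"
    and r2: "strict_mono r2" and w2: "weakly_converges (x \<circ> r2) z2" for r1 z1 r2 z2
  proof -
    have s1: "vi_solution f B z1" by (rule cluster[OF r1 w1])
    have s2: "vi_solution f B z2" by (rule cluster[OF r2 w2])
    define v where "v = z2 - z1"
    obtain L where L: "(\<lambda>n. W n v) \<longlonglongrightarrow> L" using Wconv[of v] by (auto simp: convergent_def)
    have Nc: "convergent (\<lambda>n. N n u)" for u
    proof -
      obtain Lu where "(\<lambda>n. W n u) \<longlonglongrightarrow> Lu" using Wconv[of u] by (auto simp: convergent_def)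
      hence "(\<lambda>n. inner (W n u) u) \<longlonglongrightarrow> inner Lu u" by (intro tendsto_intros)
      thus ?thesis unfolding N_def by (auto simp: convergent_def)
    qed
    have id: "inner (x n) (W n v) = (N n (x n - z1) - N n (x n - z2) - N n z1 + N n z2) / 2" for n
    proof -
      have "inner (W n (x n)) z2 - inner (W n (x n)) z1 = inner (x n) (W n v)"
        unfolding v_def by (simp add: Wsa bl_diff[OF Wbl] inner_diff_right)
      thus ?thesis unfolding Nexp by simp
    qed
    obtain a1 where a1: "(\<lambda>n. N n (x n - z1)) \<longlonglongrightarrow> a1" using conv[OF s1] by (auto simp: convergent_def)
    obtain a2 where a2: "(\<lambda>n. N n (x n - z2)) \<longlonglongrightarrow> a2" using conv[OF s2] by (auto simp: convergent_def)
    obtain b1 where b1: "(\<lambda>n. N n z1) \<longlonglongrightarrow> b1" using Nc[of z1] by (auto simp: convergent_def)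
    obtain b2 where b2: "(\<lambda>n. N n z2) \<longlonglongrightarrow> b2" using Nc[of z2] by (auto simp: convergent_def)
    have "(\<lambda>n. (N n (x n - z1) - N n (x n - z2) - N n z1 + N n z2) / 2) \<longlonglongrightarrow> (a1 - a2 - b1 + b2) / 2"
      by (intro tendsto_divide tendsto_add tendsto_diff a1 a2 b1 b2 tendsto_const) auto
    then obtain l where l: "(\<lambda>n. inner (x n) (W n v)) \<longlonglongrightarrow> l" unfolding id by blast
    have "(\<lambda>n. inner (x n) (W n v - L)) \<longlonglongrightarrow> 0"
    proof (rule Lim_null_comparison)
      show "\<forall>\<^sub>F n in sequentially. norm (inner (x n) (W n v - L)) \<le> \<bar>Mx\<bar> * norm (W n v - L)"
      proof (rule always_eventually, rule allI)
        fix n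
        have "norm (inner (x n) (W n v - L)) \<le> norm (x n) * norm (W n v - L)" by (simp add: Cauchy_Schwarz_ineq2)
        also have "\<dots> \<le> \<bar>Mx\<bar> * norm (W n v - L)" using Mx[of n] by (intro mult_right_mono) auto
        finally show "norm (inner (x n) (W n v - L)) \<le> \<bar>Mx\<bar> * norm (W n v - L)" .
      qed
      have "(\<lambda>n. W n v - L) \<longlonglongrightarrow> 0" using L by (simp add: LIM_zero)
      hence "(\<lambda>n. norm (W n v - L)) \<longlonglongrightarrow> 0" by (simp add: tendsto_norm_zero)
      thus "(\<lambda>n. \<bar>Mx\<bar> * norm (W n v - L)) \<longlonglongrightarrow> 0" by (rule tendsto_mult_right_zero)
    qed
    hence "(\<lambda>n. inner (x n) (W n v) - inner (x n) (W n v - L)) \<longlonglongrightarrow> l - 0" by (intro tendsto_diff l)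
    hence xl: "(\<lambda>n. inner (x n) L) \<longlonglongrightarrow> l" by (simp add: inner_diff_right)
    have "inner z1 L = l"
    proof -
      have "(\<lambda>k. inner (x (r1 k)) L) \<longlonglongrightarrow> l" using LIMSEQ_subseq_LIMSEQ[OF xl r1] by (simp add: o_def)
      moreover have "(\<lambda>k. inner (x (r1 k)) L) \<longlonglongrightarrow> inner z1 L" using w1 unfolding weakly_converges_def by (simp add: o_def)
      ultimately show ?thesis using LIMSEQ_unique by blast
    qed
    moreover have "inner z2 L = l"
    proof -
      have "(\<lambda>k. inner (x (r2 k)) L) \<longlonglongrightarrow> l" using LIMSEQ_subseq_LIMSEQ[OF xl r2] by (simp add: o_def)
      moreover have "(\<lambda>k. inner (x (r2 k)) L) \<longlonglongrightarrow> inner z2 L" using w2 unfolding weakly_converges_def by (simp add: o_def)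
      ultimately show ?thesis using LIMSEQ_unique by blast
    qed
    ultimately have vL: "inner v L = 0" unfolding v_def by (simp add: inner_diff_left)
    have "(\<lambda>n. N n v) \<longlonglongrightarrow> inner L v" unfolding N_def using L by (intro tendsto_intros)
    moreover have "(norm v)\<^sup>2 / \<mu> \<le> N n v" for n
      using Wlow[of v n] \<mu>pos unfolding N_def by (simp add: field_simps)
    ultimately have "(norm v)\<^sup>2 / \<mu> \<le> inner L v" by (intro LIMSEQ_le_const) auto
    hence "(norm v)\<^sup>2 / \<mu> \<le> 0" using vL by (simp add: inner_commute)
    hence "(norm v)\<^sup>2 \<le> 0" using \<mu>pos by (simp add: divide_le_0_iff)
    hence "v = 0" by simp
    thus ?thesis unfolding v_def by simp
  qed
  obtain r z where r: "strict_mono r" and wz: "weakly_converges (x \<circ> r) z"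
    using weak_compact[of x Mx, OF Mx] by blast
  have zs: "vi_solution f B z" by (rule cluster[OF r wz])
  have "weakly_converges x z"
    unfolding weakly_converges_def
  proof (rule allI, rule ccontr)
    fix h assume nc: "\<not> (\<lambda>n. inner (x n) h) \<longlonglongrightarrow> inner z h"
    have "\<not> (\<forall>r>0. \<exists>no. \<forall>n\<ge>no. norm (inner (x n) h - inner z h) < r)" using nc unfolding LIMSEQ_iff by assumption
    then obtain e :: real where e: "e > 0" and ne: "\<not> (\<exists>no::nat. \<forall>n\<ge>no. norm (inner (x n) h - inner z h) < e)"
      by blast
    have inf: "\<exists>n\<ge>N. e \<le> \<bar>inner (x n) h - inner z h\<bar>" for N
      using ne by (auto simp: not_less)
    define S where "S = {n. e \<le> \<bar>inner (x n) h - inner z h\<bar>}"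
    have "infinite S" unfolding infinite_nat_iff_unbounded_le S_def using inf by simp
    from infinite_enumerate[OF this] obtain s :: "nat \<Rightarrow> nat" where s0: "strict_mono s \<and> (\<forall>n. s n \<in> S)" ..
    hence s: "strict_mono s" "\<And>k. s k \<in> S" by simp_all
    have xsM: "norm ((x \<circ> s) k) \<le> Mx" for k using Mx by simp
    obtain r' :: "nat \<Rightarrow> nat" and z' where r': "strict_mono r'" and wz': "weakly_converges ((x \<circ> s) \<circ> r') z'"
      using weak_compact[of "x \<circ> s" Mx, OF xsM] by blast
    have sr: "strict_mono (s \<circ> r')" using s(1) r' by (rule strict_mono_o)
    have wz'': "weakly_converges (x \<circ> (s \<circ> r')) z'" using wz' by (simp add: o_assoc)
    have "z' = z" by (rule uniq[OF sr wz'' r wz])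
    hence "(\<lambda>k. inner (x (s (r' k))) h) \<longlonglongrightarrow> inner z h" using wz'' unfolding weakly_converges_def by (simp add: o_def)
    hence "\<exists>no. \<forall>k\<ge>no. norm (inner (x (s (r' k))) h - inner z h) < e"
      using e unfolding LIMSEQ_iff by blast
    then obtain no where no: "\<And>k. k \<ge> no \<Longrightarrow> norm (inner (x (s (r' k))) h - inner z h) < e"
      by blast
    have "s (r' no) \<in> S" by (rule s(2))
    thus False using no[of no] unfolding S_def by simp
  qed
  thus ?thesis using zs by blast
qed

end
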